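(* Let $W_0,W_1,W_2,W_3$ be discretely $\mathbb{R}$-graded $V$-modules, each satisfying the $C_1$-cofiniteness condition, and let $T$, $J$, $F_r(T)$, $F_r(J)$ be as in the context. Then there exists $M\in\mathbb{Z}$ such that for every $r\in\mathbb{R}$, $$F_r(T)\subset F_r(J)+F_M(T).$$ In particular $T=J+F_M(T)$.
   Context: Let $V=\coprod_{n\in\mathbb{Z}}V_{(n)}$ be a vertex operator algebra (in the sense of Frenkel–Lepowsky–Meurman and Frenkel–Huang–Lepowsky), with vacuum $\mathbf{1}$ and Virasoro operators $L(n)$, and let $V_+=\coprod_{n>0}V_{(n)}$. For a $V$-module $W$ write $Y(u,x)=\sum_{n\in\mathbb{Z}}u_nx^{-n-1}$. Let $C_1(W)$ be the subspace of $W$ spanned by all $u_{-1}w$ with $u\in V_+$, $w\in W$; $W$ is called $C_1$-cofinite if $\dim W/C_1(W)<\infty$. A discretely $\mathbb{R}$-graded $V$-module is a $V$-module graded by $L(0)$-eigenvalues (weights) in $\mathbb{R}$ such that for every $r\in\mathbb{R}$ the sum of its homogeneous subspaces of weight $\le r$ is finite-dimensional. $W'$ denotes the contragredient module of $W$; for $u\in V$, $n\in\mathbb{Z}$, $u^*_n:W\to W$ denotes the adjoint of $u_n:W'\to W'$ (so $\mathrm{wt}\,u^*_n=-\mathrm{wt}\,u+n+1$). Let $R=\mathbb{C}[z_1^{\pm1},z_2^{\pm1},(z_1-z_2)^{-1}]$ and $T=R\otimes W_0\otimes W_1\otimes W_2\otimes W_3$ (an $R$-module; write $f(z_1,z_2)w_0\otimes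 w_1\otimes w_2\otimes w_3$ for $f\otimes w_0\otimes\cdots\otimes w_3$). Let $J\subset T$ be the $R$-submodule generated by all elements, for $u\in V_+$, $w_i\in W_i$, $\mathcal{A}=\sum_{k\ge0}\binom{-1}{k}(-z_1)^k u^*_{-1-k}w_0\otimes w_1\otimes w_2\otimes w_3-w_0\otimes u_{-1}w_1\otimes w_2\otimes w_3-\sum_{k\ge0}\binom{-1}{k}(-(z_1-z_2))^{-1-k}w_0\otimes w_1\otimes u_kw_2\otimes w_3-\sum_{k\ge0}\binom{-1}{k}(-z_1)^{-1-k}w_0\otimes w_1\otimes w_2\otimes u_kw_3$; $\mathcal{B}=\sum_{k\ge0}\binom{-1}{k}(-z_2)^k u^*_{-1-k}w_0\otimes w_1\otimes w_2\otimes w_3-\sum_{k\ge0}\binom{-1}{k}(z_1-z_2)^{-1-k}w_0\otimes u_kw_1\otimes w_2\otimes w_3-w_0\otimes w_1\otimes u_{-1}w_2\otimes w_3-\sum_{k\ge0}\binom{-1}{k}(-z_2)^{-1-k}w_0\otimes w_1\otimes w_2\otimes u_kw_3$; $\mathcal{C}=u^*_{-1}w_0\otimes w_1\otimes w_2\otimes w_3-\sum_{k\ge0}\binom{-1}{k}z_1^{-1-k}w_0\otimes u_kw_1\otimes w_2\otimes w_3-\sum_{k\ge0}\binom{-1}{k}z_2^{-1-k}w_0\otimes w_1\otimes u_kw_2\otimes w_3-w_0\otimes w_1\otimes w_2\otimes u_{-1}w_3$; $\mathcal{D}=u_{-1}w_0\otimes w_1\otimes w_2\otimes w_3-\sum_{k\ge0}\binom{-1}{k}z_1^{1+k}w_0\otimes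 e^{z_1^{-1}L(1)}(-z_1^2)^{L(0)}u_k(-z_1^{-2})^{L(0)}e^{-z_1^{-1}L(1)}w_1\otimes w_2\otimes w_3-\sum_{k\ge0}\binom{-1}{k}z_2^{1+k}w_0\otimes w_1\otimes e^{z_2^{-1}L(1)}(-z_2^2)^{L(0)}u_k(-z_2^{-2})^{L(0)}e^{-z_2^{-1}L(1)}w_2\otimes w_3-w_0\otimes w_1\otimes w_2\otimes u^*_{-1}w_3$. Grade $T$ by declaring $f(z_1,z_2)w_0\otimes w_1\otimes w_2\otimes w_3$ (with $f\in R$, $w_i$ homogeneous) to have weight $\mathrm{wt}\,w_0+\mathrm{wt}\,w_1+\mathrm{wt}\,w_2+\mathrm{wt}\,w_3$ (elements of $R$ have weight $0$); let $T_{(r)}$ be the weight-$r$ subspace, $F_r(T)=\coprod_{s\le r}T_{(s)}$ and $F_r(J)=J\cap F_r(T)$. *)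

theory Defs
  imports Complex_Main "HOL-Library.Function_Algebras"
begin

text \<open>Sum of a family with finite support (used for the formally infinite sums
that are finite because of truncation conditions).\<close>
definition fsum :: "('i \<Rightarrow> 'a::comm_monoid_add) \<Rightarrow> 'a" where
  "fsum f = sum f {i. f i \<noteq> 0}"

definition graded_decomp :: "(complex \<Rightarrow> 'a \<Rightarrow> 'a::ab_group_add) \<Rightarrow> ('i \<Rightarrow> 'a set) \<Rightarrow> bool" where
  "graded_decomp sc G \<longleftrightarrow> (\<forall>i. module.subspace sc (G i)) \<and>
     (\<forall>v. \<exists>!c. finite {i. c i \<noteq> 0} \<and> (\<forall>i. c i \<in> G i) \<and> v = sum c {i. c i \<noteq> 0})"

definition grcomp :: "('i \<Rightarrow> 'a set) \<Rightarrow> 'a::ab_group_add \<Rightarrow> 'i \<Rightarrow> 'a" where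
  "grcomp G v = (THE c. finite {i. c i \<noteq> 0} \<and> (\<forall>i. c i \<in> G i) \<and> v = sum c {i. c i \<noteq> 0})"

definition findim :: "(complex \<Rightarrow> 'a \<Rightarrow> 'a::ab_group_add) \<Rightarrow> 'a set \<Rightarrow> bool" where
  "findim sc S \<longleftrightarrow> (\<exists>B. finite B \<and> S \<subseteq> module.span sc B)"

text \<open>Data of a VOA: scalar multiplication, vertex operator (Y u n v = u_n v),
vacuum and conformal vector.\<close>
record 'v voa =
  vsc :: "complex \<Rightarrow> 'v \<Rightarrow> 'v"
  vY :: "'v \<Rightarrow> int \<Rightarrow> 'v \<Rightarrow> 'v"
  vac :: 'v
  omega :: 'v

definition vL :: "'v voa \<Rightarrow> int \<Rightarrow> 'v \<Rightarrow> 'v" where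
  "vL V n = vY V (omega V) (n + 1)"

definition Vgr :: "'v::ab_group_add voa \<Rightarrow> int \<Rightarrow> 'v set" where
  "Vgr V n = {v. vL V 0 v = vsc V (of_int n) v}"

definition Vplus :: "'v::ab_group_add voa \<Rightarrow> 'v set" where
  "Vplus V = module.span (vsc V) (\<Union>n\<in>{n. n > 0}. Vgr V n)"

definition is_VOA :: "'v::ab_group_add voa \<Rightarrow> bool" where
  "is_VOA V \<longleftrightarrow>
    vector_space (vsc V) \<and>
    (\<forall>n v. Vector_Spaces.linear (vsc V) (vsc V) (\<lambda>u. vY V u n v)) \<and>
    (\<forall>u n. Vector_Spaces.linear (vsc V) (vsc V) (vY V u n)) \<and>
    (\<forall>u v. \<exists>N. \<forall>n\<ge>N. vY V u n v = 0) \<and>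
    (\<forall>n v. vY V (vac V) n v = (if n = -1 then v else 0)) \<and>
    (\<forall>u n. n \<ge> 0 \<longrightarrow> vY V u n (vac V) = 0) \<and>
    (\<forall>u. vY V u (-1) (vac V) = u) \<and>
    (\<forall>u v w l m n.
       fsum (\<lambda>i::nat. vsc V (of_int m gchoose i) (vY V (vY V u (l + int i) v) (m + n - int i) w)) =
       fsum (\<lambda>i::nat. vsc V ((-1) ^ i * (of_int l gchoose i))
          (vY V u (m + l - int i) (vY V v (n + int i) w)
           - vsc V ((-1) powi l) (vY V v (l + n - int i) (vY V u (m + int i) w))))) \<and>
    (\<exists>c::complex. \<forall>m n v. vL V m (vL V n v) - vL V n (vL V m v) =
        vsc V (of_int (m - n)) (vL V (m + n) v)
        + (if m + n = 0 then vsc V ((of_int m ^ 3 - of_int m) / 12 * c) v else 0)) \<and>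
    (\<forall>u n v. vY V (vL V (-1) u) n v = vsc V (- of_int n) (vY V u (n - 1) v)) \<and>
    omega V \<in> Vgr V 2 \<and>
    graded_decomp (vsc V) (Vgr V) \<and>
    (\<forall>n. findim (vsc V) (Vgr V n)) \<and>
    (\<exists>N. \<forall>n<N. Vgr V n = {0})"

record ('v, 'w) vmod =
  msc :: "complex \<Rightarrow> 'w \<Rightarrow> 'w"
  mY :: "'v \<Rightarrow> int \<Rightarrow> 'w \<Rightarrow> 'w"

definition mL :: "'v voa \<Rightarrow> ('v, 'w) vmod \<Rightarrow> int \<Rightarrow> 'w \<Rightarrow> 'w" where
  "mL V W n = mY W (omega V) (n + 1)"

definition Wgr :: "'v voa \<Rightarrow> ('v, 'w::ab_group_add) vmod \<Rightarrow> real \<Rightarrow> 'w set" where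
  "Wgr V W r = {w. mL V W 0 w = msc W (of_real r) w}"

definition is_disc_module :: "'v::ab_group_add voa \<Rightarrow> ('v, 'w::ab_group_add) vmod \<Rightarrow> bool" where
  "is_disc_module V W \<longleftrightarrow>
    vector_space (msc W) \<and>
    (\<forall>n w. Vector_Spaces.linear (vsc V) (msc W) (\<lambda>u. mY W u n w)) \<and>
    (\<forall>u n. Vector_Spaces.linear (msc W) (msc W) (mY W u n)) \<and>
    (\<forall>u w. \<exists>N. \<forall>n\<ge>N. mY W u n w = 0) \<and>
    (\<forall>n w. mY W (vac V) n w = (if n = -1 then w else 0)) \<and>
    (\<forall>u v w l m n.
       fsum (\<lambda>i::nat. msc W (of_int m gchoose i) (mY W (vY V u (l + int i) v) (m + n - int i) w)) =
       fsum (\<lambda>i::nat. msc W ((-1) ^ i * (of_int l gchoose i))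
          (mY W u (m + l - int i) (mY W v (n + int i) w)
           - msc W ((-1) powi l) (mY W v (l + n - int i) (mY W u (m + int i) w))))) \<and>
    (\<forall>u n w. mY W (vL V (-1) u) n w = msc W (- of_int n) (mY W u (n - 1) w)) \<and>
    graded_decomp (msc W) (Wgr V W) \<and>
    (\<forall>r. findim (msc W) (module.span (msc W) (\<Union>s\<in>{s. s \<le> r}. Wgr V W s)))"

definition C1 :: "'v::ab_group_add voa \<Rightarrow> ('v, 'w::ab_group_add) vmod \<Rightarrow> 'w set" where
  "C1 V W = module.span (msc W) {mY W u (-1) w | u w. u \<in> Vplus V}"

definition C1_cofinite :: "'v::ab_group_add voa \<Rightarrow> ('v, 'w::ab_group_add) vmod \<Rightarrow> bool" where
  "C1_cofinite V W \<longleftrightarrow> (\<exists>B. finite B \<and> module.span (msc W) (B \<union> C1 V W) = UNIV)"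

text \<open>u^*_n : W \<rightarrow> W, the adjoint of the contragredient operator u_n on W'.
By definition of the contragredient module (FHL),
 <Y'(u,x)w',w> = <w', Y(e^{x L(1)} (-x^{-2})^{L(0)} u, x^{-1}) w>,
so for u homogeneous of weight m the adjoint of u'_n is
 (-1)^m \<Sum>_j (1/j!) (L(1)^j u)_{2m-j-n-2};
for general u one sums over homogeneous components.\<close>
definition ustar :: "'v::ab_group_add voa \<Rightarrow> ('v, 'w::ab_group_add) vmod \<Rightarrow> 'v \<Rightarrow> int \<Rightarrow> 'w \<Rightarrow> 'w" where
  "ustar V W u n w = fsum (\<lambda>m::int. msc W ((-1) powi m)
      (fsum (\<lambda>j::nat. msc W (1 / fact j)
         (mY W ((vL V 1 ^^ j) (grcomp (Vgr V) u m)) (2 * m - int j - n - 2) w))))"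

text \<open>Concrete model of the tensor product: the pure tensor f \<otimes> w0 \<otimes> w1 \<otimes> w2 \<otimes> w3
is represented by the function
 ((z1,z2),\<phi>0,\<phi>1,\<phi>2,\<phi>3) \<mapsto> f(z1,z2) \<phi>0(w0) \<phi>1(w1) \<phi>2(w2) \<phi>3(w3)
on {z1 \<noteq> 0, z2 \<noteq> 0, z1 \<noteq> z2} \<times> W0^* \<times> ... \<times> W3^* (algebraic duals), extended by 0.
This map from the algebraic tensor product is injective, so T is the span of these.\<close>

type_synonym ('a, 'b, 'c, 'd) tpt =
  "(complex \<times> complex) \<times> ('a \<Rightarrow> complex) \<times> ('b \<Rightarrow> complex) \<times> ('c \<Rightarrow> complex) \<times> ('d \<Rightarrow> complex)"

type_synonym ('a, 'b, 'c, 'd) tel = "('a, 'b, 'c, 'd) tpt \<Rightarrow> complex"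

definition ten ::
  "('v, 'a::ab_group_add) vmod \<Rightarrow> ('v, 'b::ab_group_add) vmod \<Rightarrow> ('v, 'c::ab_group_add) vmod \<Rightarrow> ('v, 'd::ab_group_add) vmod \<Rightarrow>
   (complex \<Rightarrow> complex \<Rightarrow> complex) \<Rightarrow> 'a \<Rightarrow> 'b \<Rightarrow> 'c \<Rightarrow> 'd \<Rightarrow> ('a, 'b, 'c, 'd) tel" where
  "ten W0 W1 W2 W3 f w0 w1 w2 w3 = (\<lambda>((z1, z2), \<phi>0, \<phi>1, \<phi>2, \<phi>3).
     if z1 \<noteq> 0 \<and> z2 \<noteq> 0 \<and> z1 \<noteq> z2 \<and>
        Vector_Spaces.linear (msc W0) (*) \<phi>0 \<and> Vector_Spaces.linear (msc W1) (*) \<phi>1 \<and>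
        Vector_Spaces.linear (msc W2) (*) \<phi>2 \<and> Vector_Spaces.linear (msc W3) (*) \<phi>3
     then f z1 z2 * \<phi>0 w0 * \<phi>1 w1 * \<phi>2 w2 * \<phi>3 w3 else 0)"

definition scT :: "complex \<Rightarrow> ('a, 'b, 'c, 'd) tel \<Rightarrow> ('a, 'b, 'c, 'd) tel" where
  "scT c t = (\<lambda>p. c * t p)"

text \<open>Monomials z1^a z2^b (z1-z2)^c spanning R = C[z1^{\<pm>1}, z2^{\<pm>1}, (z1-z2)^{-1}].\<close>
definition Rmon :: "int \<Rightarrow> int \<Rightarrow> int \<Rightarrow> complex \<Rightarrow> complex \<Rightarrow> complex" where
  "Rmon a b c = (\<lambda>z1 z2. z1 powi a * z2 powi b * (z1 - z2) powi c)"

definition Rmul :: "int \<Rightarrow> int \<Rightarrow> int \<Rightarrow> ('a, 'b, 'c, 'd) tel \<Rightarrow> ('a, 'b, 'c, 'd) tel" where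
  "Rmul a b c t = (\<lambda>((z1, z2), \<phi>s). Rmon a b c z1 z2 * t ((z1, z2), \<phi>s))"

definition Tsp :: "('v, 'a::ab_group_add) vmod \<Rightarrow> ('v, 'b::ab_group_add) vmod \<Rightarrow> ('v, 'c::ab_group_add) vmod \<Rightarrow> ('v, 'd::ab_group_add) vmod \<Rightarrow>
   ('a, 'b, 'c, 'd) tel set" where
  "Tsp W0 W1 W2 W3 = module.span scT
     {ten W0 W1 W2 W3 (Rmon a b c) w0 w1 w2 w3 | a b c w0 w1 w2 w3. True}"

definition FT :: "'v::ab_group_add voa \<Rightarrow> ('v, 'a::ab_group_add) vmod \<Rightarrow> ('v, 'b::ab_group_add) vmod \<Rightarrow>
   ('v, 'c::ab_group_add) vmod \<Rightarrow> ('v, 'd::ab_group_add) vmod \<Rightarrow> real \<Rightarrow> ('a, 'b, 'c, 'd) tel set" where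
  "FT V W0 W1 W2 W3 r = module.span scT
     {ten W0 W1 W2 W3 (Rmon a b c) w0 w1 w2 w3 | a b c w0 w1 w2 w3 r0 r1 r2 r3.
        w0 \<in> Wgr V W0 r0 \<and> w1 \<in> Wgr V W1 r1 \<and> w2 \<in> Wgr V W2 r2 \<and> w3 \<in> Wgr V W3 r3 \<and>
        r0 + r1 + r2 + r3 \<le> r}"

text \<open>The operator e^{z^{-1}L(1)} (-z^2)^{L(0)} u_k (-z^{-2})^{L(0)} e^{-z^{-1}L(1)} applied to w,
multiplied by the coefficient (-1 choose k) z^{1+k}, as an element of R \<otimes> W (placed in slot 1 or 2).
Here (-z^2)^{L(0)} u_k (-z^{-2})^{L(0)} = (-z^2)^{wt u_k} u_k = (-z^2)^{m-k-1} u_k for u of weight m.\<close>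
definition Dterm1 :: "'v::ab_group_add voa \<Rightarrow> ('v, 'a::ab_group_add) vmod \<Rightarrow> ('v, 'b::ab_group_add) vmod \<Rightarrow>
   ('v, 'c::ab_group_add) vmod \<Rightarrow> ('v, 'd::ab_group_add) vmod \<Rightarrow> 'v \<Rightarrow> 'a \<Rightarrow> 'b \<Rightarrow> 'c \<Rightarrow> 'd \<Rightarrow> ('a, 'b, 'c, 'd) tel" where
  "Dterm1 V W0 W1 W2 W3 u w0 w1 w2 w3 =
     fsum (\<lambda>k::nat. fsum (\<lambda>m::int. fsum (\<lambda>i::nat. fsum (\<lambda>j::nat.
       ten W0 W1 W2 W3
         (\<lambda>z1 z2. ((-1) gchoose k) * z1 ^ (1 + k) * (- (z1 ^ 2)) powi (m - int k - 1)
                    * (z1 powi (- int i) / fact i) * ((- z1) powi (- int j) / fact j))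
         w0 ((mL V W1 1 ^^ i) (mY W1 (grcomp (Vgr V) u m) (int k) ((mL V W1 1 ^^ j) w1))) w2 w3))))"

definition Dterm2 :: "'v::ab_group_add voa \<Rightarrow> ('v, 'a::ab_group_add) vmod \<Rightarrow> ('v, 'b::ab_group_add) vmod \<Rightarrow>
   ('v, 'c::ab_group_add) vmod \<Rightarrow> ('v, 'd::ab_group_add) vmod \<Rightarrow> 'v \<Rightarrow> 'a \<Rightarrow> 'b \<Rightarrow> 'c \<Rightarrow> 'd \<Rightarrow> ('a, 'b, 'c, 'd) tel" where
  "Dterm2 V W0 W1 W2 W3 u w0 w1 w2 w3 =
     fsum (\<lambda>k::nat. fsum (\<lambda>m::int. fsum (\<lambda>i::nat. fsum (\<lambda>j::nat.
       ten W0 W1 W2 W3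
         (\<lambda>z1 z2. ((-1) gchoose k) * z2 ^ (1 + k) * (- (z2 ^ 2)) powi (m - int k - 1)
                    * (z2 powi (- int i) / fact i) * ((- z2) powi (- int j) / fact j))
         w0 w1 ((mL V W2 1 ^^ i) (mY W2 (grcomp (Vgr V) u m) (int k) ((mL V W2 1 ^^ j) w2))) w3))))"

definition genA :: "'v::ab_group_add voa \<Rightarrow> ('v, 'a::ab_group_add) vmod \<Rightarrow> ('v, 'b::ab_group_add) vmod \<Rightarrow>
   ('v, 'c::ab_group_add) vmod \<Rightarrow> ('v, 'd::ab_group_add) vmod \<Rightarrow> 'v \<Rightarrow> 'a \<Rightarrow> 'b \<Rightarrow> 'c \<Rightarrow> 'd \<Rightarrow> ('a, 'b, 'c, 'd) tel" where
  "genA V W0 W1 W2 W3 u w0 w1 w2 w3 =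
     fsum (\<lambda>k::nat. ten W0 W1 W2 W3 (\<lambda>z1 z2. ((-1) gchoose k) * (- z1) ^ k)
                       (ustar V W0 u (-1 - int k) w0) w1 w2 w3)
     - ten W0 W1 W2 W3 (\<lambda>z1 z2. 1) w0 (mY W1 u (-1) w1) w2 w3
     - fsum (\<lambda>k::nat. ten W0 W1 W2 W3 (\<lambda>z1 z2. ((-1) gchoose k) * (- (z1 - z2)) powi (-1 - int k))
                       w0 w1 (mY W2 u (int k) w2) w3)
     - fsum (\<lambda>k::nat. ten W0 W1 W2 W3 (\<lambda>z1 z2. ((-1) gchoose k) * (- z1) powi (-1 - int k))
                       w0 w1 w2 (mY W3 u (int k) w3))"

definition genB :: "'v::ab_group_add voa \<Rightarrow> ('v, 'a::ab_group_add) vmod \<Rightarrow> ('v, 'b::ab_group_add) vmod \<Rightarrow>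
   ('v, 'c::ab_group_add) vmod \<Rightarrow> ('v, 'd::ab_group_add) vmod \<Rightarrow> 'v \<Rightarrow> 'a \<Rightarrow> 'b \<Rightarrow> 'c \<Rightarrow> 'd \<Rightarrow> ('a, 'b, 'c, 'd) tel" where
  "genB V W0 W1 W2 W3 u w0 w1 w2 w3 =
     fsum (\<lambda>k::nat. ten W0 W1 W2 W3 (\<lambda>z1 z2. ((-1) gchoose k) * (- z2) ^ k)
                       (ustar V W0 u (-1 - int k) w0) w1 w2 w3)
     - fsum (\<lambda>k::nat. ten W0 W1 W2 W3 (\<lambda>z1 z2. ((-1) gchoose k) * (z1 - z2) powi (-1 - int k))
                       w0 (mY W1 u (int k) w1) w2 w3)
     - ten W0 W1 W2 W3 (\<lambda>z1 z2. 1) w0 w1 (mY W2 u (-1) w2) w3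
     - fsum (\<lambda>k::nat. ten W0 W1 W2 W3 (\<lambda>z1 z2. ((-1) gchoose k) * (- z2) powi (-1 - int k))
                       w0 w1 w2 (mY W3 u (int k) w3))"

definition genC :: "'v::ab_group_add voa \<Rightarrow> ('v, 'a::ab_group_add) vmod \<Rightarrow> ('v, 'b::ab_group_add) vmod \<Rightarrow>
   ('v, 'c::ab_group_add) vmod \<Rightarrow> ('v, 'd::ab_group_add) vmod \<Rightarrow> 'v \<Rightarrow> 'a \<Rightarrow> 'b \<Rightarrow> 'c \<Rightarrow> 'd \<Rightarrow> ('a, 'b, 'c, 'd) tel" where
  "genC V W0 W1 W2 W3 u w0 w1 w2 w3 =
     ten W0 W1 W2 W3 (\<lambda>z1 z2. 1) (ustar V W0 u (-1) w0) w1 w2 w3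
     - fsum (\<lambda>k::nat. ten W0 W1 W2 W3 (\<lambda>z1 z2. ((-1) gchoose k) * z1 powi (-1 - int k))
                       w0 (mY W1 u (int k) w1) w2 w3)
     - fsum (\<lambda>k::nat. ten W0 W1 W2 W3 (\<lambda>z1 z2. ((-1) gchoose k) * z2 powi (-1 - int k))
                       w0 w1 (mY W2 u (int k) w2) w3)
     - ten W0 W1 W2 W3 (\<lambda>z1 z2. 1) w0 w1 w2 (mY W3 u (-1) w3)"

definition genD :: "'v::ab_group_add voa \<Rightarrow> ('v, 'a::ab_group_add) vmod \<Rightarrow> ('v, 'b::ab_group_add) vmod \<Rightarrow>
   ('v, 'c::ab_group_add) vmod \<Rightarrow> ('v, 'd::ab_group_add) vmod \<Rightarrow> 'v \<Rightarrow> 'a \<Rightarrow> 'b \<Rightarrow> 'c \<Rightarrow> 'd \<Rightarrow> ('a, 'b, 'c, 'd) tel" where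
  "genD V W0 W1 W2 W3 u w0 w1 w2 w3 =
     ten W0 W1 W2 W3 (\<lambda>z1 z2. 1) (mY W0 u (-1) w0) w1 w2 w3
     - Dterm1 V W0 W1 W2 W3 u w0 w1 w2 w3
     - Dterm2 V W0 W1 W2 W3 u w0 w1 w2 w3
     - ten W0 W1 W2 W3 (\<lambda>z1 z2. 1) w0 w1 w2 (ustar V W3 u (-1) w3)"

definition gens :: "'v::ab_group_add voa \<Rightarrow> ('v, 'a::ab_group_add) vmod \<Rightarrow> ('v, 'b::ab_group_add) vmod \<Rightarrow>
   ('v, 'c::ab_group_add) vmod \<Rightarrow> ('v, 'd::ab_group_add) vmod \<Rightarrow> ('a, 'b, 'c, 'd) tel set" where
  "gens V W0 W1 W2 W3 =
     {g V W0 W1 W2 W3 u w0 w1 w2 w3 | g u w0 w1 w2 w3.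
        g \<in> {genA, genB, genC, genD} \<and> u \<in> Vplus V}"

text \<open>J: the R-submodule of T generated by the generators, i.e. the complex span of
all products (monomial in R) \<cdot> generator.\<close>
definition Jsp :: "'v::ab_group_add voa \<Rightarrow> ('v, 'a::ab_group_add) vmod \<Rightarrow> ('v, 'b::ab_group_add) vmod \<Rightarrow>
   ('v, 'c::ab_group_add) vmod \<Rightarrow> ('v, 'd::ab_group_add) vmod \<Rightarrow> ('a, 'b, 'c, 'd) tel set" where
  "Jsp V W0 W1 W2 W3 = module.span scT
     {Rmul a b c g | a b c g. g \<in> gens V W0 W1 W2 W3}"

definition setplus :: "'a::plus set \<Rightarrow> 'a set \<Rightarrow> 'a set" where
  "setplus A B = {x + y | x y. x \<in> A \<and> y \<in> B}"

end

theory Submission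
  imports Defs
begin


lemma lin_add: "Vector_Spaces.linear s1 s2 f \<Longrightarrow> f (x + y) = f x + f y"
  by (simp add: linear_iff_module_hom module_hom.add)
lemma lin_scale: "Vector_Spaces.linear s1 s2 f \<Longrightarrow> f (s1 c x) = s2 c (f x)"
  by (simp add: linear_iff_module_hom module_hom.scale)
lemma lin_zero: "Vector_Spaces.linear s1 s2 f \<Longrightarrow> f 0 = 0"
  by (simp add: linear_iff_module_hom module_hom.zero)
lemma lin_diff: "Vector_Spaces.linear s1 s2 f \<Longrightarrow> f (x - y) = f x - f y"
  by (simp add: linear_iff_module_hom module_hom.diff)
lemma lin_sum: "Vector_Spaces.linear s1 s2 f \<Longrightarrow> f (sum g A) = (\<Sum>a\<in>A. f (g a))"
  by (simp add: linear_iff_module_hom module_hom.sum)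

lemma module_scT: "module (scT :: complex \<Rightarrow> ('a,'b,'c,'d) tel \<Rightarrow> _)"
  by unfold_locales (auto simp: scT_def fun_eq_iff algebra_simps)

lemma fsum_eq: "finite A \<Longrightarrow> (\<And>i. i \<notin> A \<Longrightarrow> f i = 0) \<Longrightarrow> fsum f = sum f A"
  unfolding fsum_def by (rule sum.mono_neutral_left) auto

lemma fsum_in: "module sc \<Longrightarrow> module.subspace sc S \<Longrightarrow> (\<And>i. f i \<in> S) \<Longrightarrow> fsum f \<in> S"
  unfolding fsum_def
  by (cases "finite {i. f i \<noteq> 0}") (auto intro: module.subspace_sum module.subspace_0)

definition isMon :: "(complex \<Rightarrow> complex \<Rightarrow> complex) \<Rightarrow> bool" where
  "isMon f \<longleftrightarrow> (\<exists>c a b e. \<forall>z1 z2. z1 \<noteq> 0 \<longrightarrow> z2 \<noteq> 0 \<longrightarrow> z1 \<noteq> z2 \<longrightarrow> f z1 z2 = c * Rmon a b e z1 z2)"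

lemma isMon_mult: "isMon f \<Longrightarrow> isMon g \<Longrightarrow> isMon (\<lambda>z1 z2. f z1 z2 * g z1 z2)"
  unfolding isMon_def
proof (elim exE)
  fix c a b e c' a' b' e'
  assume f: "\<forall>z1 z2. z1 \<noteq> 0 \<longrightarrow> z2 \<noteq> 0 \<longrightarrow> z1 \<noteq> z2 \<longrightarrow> f z1 z2 = c * Rmon a b e z1 z2"
    and g: "\<forall>z1 z2. z1 \<noteq> 0 \<longrightarrow> z2 \<noteq> 0 \<longrightarrow> z1 \<noteq> z2 \<longrightarrow> g z1 z2 = c' * Rmon a' b' e' z1 z2"
  show "\<exists>c a b e. \<forall>z1 z2. z1 \<noteq> 0 \<longrightarrow> z2 \<noteq> 0 \<longrightarrow> z1 \<noteq> z2 \<longrightarrow> f z1 z2 * g z1 z2 = c * Rmon a b e z1 z2"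
    by (rule exI[of _ "c*c'"], rule exI[of _ "a+a'"], rule exI[of _ "b+b'"], rule exI[of _ "e+e'"])
       (auto simp: f g Rmon_def power_int_add)
qed

lemma isMon_const: "isMon (\<lambda>z1 z2. c)"
  unfolding isMon_def by (rule exI[of _ c], rule exI[of _ 0], rule exI[of _ 0], rule exI[of _ 0]) (simp add: Rmon_def)

lemma isMon_Rmon: "isMon (\<lambda>z1 z2. Rmon a b e z1 z2)"
  unfolding isMon_def by (rule exI[of _ 1]) auto

lemma isMon_z1: "isMon (\<lambda>z1 z2. z1)"
  unfolding isMon_def by (rule exI[of _ 1], rule exI[of _ 1], rule exI[of _ 0], rule exI[of _ 0]) (simp add: Rmon_def)
lemma isMon_z2: "isMon (\<lambda>z1 z2. z2)"
  unfolding isMon_def by (rule exI[of _ 1], rule exI[of _ 0], rule exI[of _ 1], rule exI[of _ 0]) (simp add: Rmon_def)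
lemma isMon_z12: "isMon (\<lambda>z1 z2. z1 - z2)"
  unfolding isMon_def by (rule exI[of _ 1], rule exI[of _ 0], rule exI[of _ 0], rule exI[of _ 1]) (simp add: Rmon_def)

lemma isMon_powi: "isMon f \<Longrightarrow> isMon (\<lambda>z1 z2. f z1 z2 powi n)"
  unfolding isMon_def
proof (elim exE)
  fix c a b e
  assume f: "\<forall>z1 z2. z1 \<noteq> 0 \<longrightarrow> z2 \<noteq> 0 \<longrightarrow> z1 \<noteq> z2 \<longrightarrow> f z1 z2 = c * Rmon a b e z1 z2"
  show "\<exists>c a b e. \<forall>z1 z2. z1 \<noteq> 0 \<longrightarrow> z2 \<noteq> 0 \<longrightarrow> z1 \<noteq> z2 \<longrightarrow> f z1 z2 powi n = c * Rmon a b e z1 z2"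
    by (rule exI[of _ "c powi n"], rule exI[of _ "a*n"], rule exI[of _ "b*n"], rule exI[of _ "e*n"])
       (auto simp: f Rmon_def power_int_mult_distrib power_int_mult)
qed

lemma isMon_power: "isMon f \<Longrightarrow> isMon (\<lambda>z1 z2. f z1 z2 ^ n)"
  using isMon_powi[of f "int n"] by simp

lemma isMon_uminus: "isMon f \<Longrightarrow> isMon (\<lambda>z1 z2. - f z1 z2)"
  using isMon_mult[OF isMon_const[of "-1"], of f] by simp

lemma isMon_div: "isMon f \<Longrightarrow> isMon (\<lambda>z1 z2. f z1 z2 / c)"
  using isMon_mult[OF _ isMon_const[of "inverse c"], of f] by (simp add: divide_inverse)

lemmas isMon_intros = isMon_Rmon isMon_const isMon_mult isMon_powi isMon_power isMon_uminus isMon_div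
  isMon_z1 isMon_z2 isMon_z12

lemma "isMon (\<lambda>z1 z2. ((-1) gchoose k) * z1 ^ (1 + k) * (- (z1 ^ 2)) powi (m - int k - 1)
                    * (z1 powi (- int i) / fact i) * ((- z1) powi (- int j) / fact j))"
  by (intro isMon_intros)
lemma "isMon (\<lambda>z1 z2. ((-1) gchoose k) * (- (z1 - z2)) powi (-1 - int k))"
  by (intro isMon_intros)



abbreviation (input) "okz z1 z2 \<equiv> z1 \<noteq> (0::complex) \<and> z2 \<noteq> 0 \<and> z1 \<noteq> z2"

lemma ten_cong: "(\<And>z1 z2. z1 \<noteq> 0 \<Longrightarrow> z2 \<noteq> 0 \<Longrightarrow> z1 \<noteq> z2 \<Longrightarrow> f z1 z2 = g z1 z2) \<Longrightarrow>
   ten W0 W1 W2 W3 f w0 w1 w2 w3 = ten W0 W1 W2 W3 g w0 w1 w2 w3"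
  by (simp add: fun_eq_iff ten_def split_paired_All)

lemma ten_scal: "ten W0 W1 W2 W3 (\<lambda>z1 z2. c * f z1 z2) w0 w1 w2 w3 = scT c (ten W0 W1 W2 W3 f w0 w1 w2 w3)"
  by (simp add: fun_eq_iff ten_def split_paired_All scT_def)

lemma Rmul_ten: "Rmul a b e (ten W0 W1 W2 W3 f w0 w1 w2 w3) = ten W0 W1 W2 W3 (\<lambda>z1 z2. Rmon a b e z1 z2 * f z1 z2) w0 w1 w2 w3"
  by (simp add: fun_eq_iff ten_def split_paired_All Rmul_def)

lemma Rmul_add: "Rmul a b e (x + y) = Rmul a b e x + Rmul a b e y"
  by (simp add: fun_eq_iff split_paired_All Rmul_def algebra_simps)
lemma Rmul_diff: "Rmul a b e (x - y) = Rmul a b e x - Rmul a b e y"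
  by (simp add: fun_eq_iff split_paired_All Rmul_def algebra_simps)
lemma Rmul_zero: "Rmul a b e 0 = 0"
  by (simp add: fun_eq_iff split_paired_All Rmul_def)
lemma Rmul_sum: "Rmul a b e (sum g A) = (\<Sum>i\<in>A. Rmul a b e (g i))"
proof (induct A rule: infinite_finite_induct)
  case (infinite A) then show ?case by (simp only: sum.infinite[OF infinite] Rmul_zero)
next
  case empty then show ?case by (simp only: sum.empty Rmul_zero)
next
  case (insert x F) then show ?case by (simp only: sum.insert[OF insert(1,2)] Rmul_add insert(3))
qed

lemma Rmul_fsum_in: "module.subspace scT S \<Longrightarrow> (\<And>i. Rmul a b e (g i) \<in> S) \<Longrightarrow> Rmul a b e (fsum g) \<in> S"
  unfolding fsum_def Rmul_sum
  by (rule module.subspace_sum[OF module_scT]) auto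

lemma ten_add0: "ten W0 W1 W2 W3 f (x + y) w1 w2 w3 = ten W0 W1 W2 W3 f x w1 w2 w3 + ten W0 W1 W2 W3 f y w1 w2 w3"
  by (auto simp: fun_eq_iff ten_def split_paired_All lin_add algebra_simps)
lemma ten_add1: "ten W0 W1 W2 W3 f w0 (x + y) w2 w3 = ten W0 W1 W2 W3 f w0 x w2 w3 + ten W0 W1 W2 W3 f w0 y w2 w3"
  by (auto simp: fun_eq_iff ten_def split_paired_All lin_add algebra_simps)
lemma ten_add2: "ten W0 W1 W2 W3 f w0 w1 (x + y) w3 = ten W0 W1 W2 W3 f w0 w1 x w3 + ten W0 W1 W2 W3 f w0 w1 y w3"
  by (auto simp: fun_eq_iff ten_def split_paired_All lin_add algebra_simps)
lemma ten_add3: "ten W0 W1 W2 W3 f w0 w1 w2 (x + y) = ten W0 W1 W2 W3 f w0 w1 w2 x + ten W0 W1 W2 W3 f w0 w1 w2 y"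
  by (auto simp: fun_eq_iff ten_def split_paired_All lin_add algebra_simps)
lemma ten_scale0: "ten W0 W1 W2 W3 f (msc W0 c x) w1 w2 w3 = scT c (ten W0 W1 W2 W3 f x w1 w2 w3)"
  by (auto simp: fun_eq_iff ten_def split_paired_All lin_scale scT_def)
lemma ten_scale1: "ten W0 W1 W2 W3 f w0 (msc W1 c x) w2 w3 = scT c (ten W0 W1 W2 W3 f w0 x w2 w3)"
  by (auto simp: fun_eq_iff ten_def split_paired_All lin_scale scT_def)
lemma ten_scale2: "ten W0 W1 W2 W3 f w0 w1 (msc W2 c x) w3 = scT c (ten W0 W1 W2 W3 f w0 w1 x w3)"
  by (auto simp: fun_eq_iff ten_def split_paired_All lin_scale scT_def)
lemma ten_scale3: "ten W0 W1 W2 W3 f w0 w1 w2 (msc W3 c x) = scT c (ten W0 W1 W2 W3 f w0 w1 w2 x)"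
  by (auto simp: fun_eq_iff ten_def split_paired_All lin_scale scT_def)
lemma ten_zero0: "ten W0 W1 W2 W3 f 0 w1 w2 w3 = 0"
  by (auto simp: fun_eq_iff ten_def split_paired_All lin_zero)
lemma ten_zero1: "ten W0 W1 W2 W3 f w0 0 w2 w3 = 0"
  by (auto simp: fun_eq_iff ten_def split_paired_All lin_zero)
lemma ten_zero2: "ten W0 W1 W2 W3 f w0 w1 0 w3 = 0"
  by (auto simp: fun_eq_iff ten_def split_paired_All lin_zero)
lemma ten_zero3: "ten W0 W1 W2 W3 f w0 w1 w2 0 = 0"
  by (auto simp: fun_eq_iff ten_def split_paired_All lin_zero)



section \<open>graded decompositions\<close>

lemma gd_prop:
  assumes "graded_decomp sc G"
  shows "finite {i. grcomp G v i \<noteq> 0} \<and> (\<forall>i. grcomp G v i \<in> G i) \<and> v = sum (grcomp G v) {i. grcomp G v i \<noteq> 0}"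
proof -
  from assms have "\<exists>!c. finite {i. c i \<noteq> 0} \<and> (\<forall>i. c i \<in> G i) \<and> v = sum c {i. c i \<noteq> 0}"
    unfolding graded_decomp_def by blast
  then show ?thesis unfolding grcomp_def by (rule theI')
qed

lemma gd_in: "graded_decomp sc G \<Longrightarrow> grcomp G v i \<in> G i"
  using gd_prop by blast

lemma gd_char:
  assumes "graded_decomp sc G" "finite A" "\<And>i. c i \<in> G i" "\<And>i. i \<notin> A \<Longrightarrow> c i = 0"
  shows "grcomp G (sum c A) = c"
proof -
  from assms(1) have ex: "\<exists>!c'. finite {i. c' i \<noteq> 0} \<and> (\<forall>i. c' i \<in> G i) \<and> sum c A = sum c' {i. c' i \<noteq> 0}"
    unfolding graded_decomp_def by blast
  have sub: "{i. c i \<noteq> 0} \<subseteq> A" using assms(4) by auto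
  have fin: "finite {i. c i \<noteq> 0}" using sub assms(2) finite_subset by blast
  have "sum c A = sum c {i. c i \<noteq> 0}"
    by (rule sum.mono_neutral_right[OF assms(2) sub]) auto
  then have P: "finite {i. c i \<noteq> 0} \<and> (\<forall>i. c i \<in> G i) \<and> sum c A = sum c {i. c i \<noteq> 0}"
    using fin assms(3) by auto
  show ?thesis unfolding grcomp_def
    using the1_equality[OF ex] P by blast
qed

lemma gd_sub: "graded_decomp sc G \<Longrightarrow> module.subspace sc (G i)"
  unfolding graded_decomp_def by blast

lemma gd_homog:
  assumes "graded_decomp sc G" "module sc" "x \<in> G s"
  shows "grcomp G x = (\<lambda>i. if i = s then x else 0)"
proof -
  have "grcomp G (sum (\<lambda>i. if i = s then x else 0) {s}) = (\<lambda>i. if i = s then x else 0)"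
    by (rule gd_char[OF assms(1)]) (auto simp: assms(3) module.subspace_0[OF assms(2) gd_sub[OF assms(1)]])
  then show ?thesis by simp
qed

lemma gd_add:
  assumes "graded_decomp sc G" "module sc"
  shows "grcomp G (x + y) = (\<lambda>i. grcomp G x i + grcomp G y i)"
proof -
  let ?A = "{i. grcomp G x i \<noteq> 0} \<union> {i. grcomp G y i \<noteq> 0}"
  have fA: "finite ?A" using gd_prop[OF assms(1)] by blast
  have "sum (grcomp G x) {i. grcomp G x i \<noteq> 0} = sum (grcomp G x) ?A"
    by (rule sum.mono_neutral_left[OF fA]) auto
  then have ex: "x = sum (grcomp G x) ?A"
    using gd_prop[OF assms(1), of x] by simp
  have "sum (grcomp G y) {i. grcomp G y i \<noteq> 0} = sum (grcomp G y) ?A"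
    by (rule sum.mono_neutral_left[OF fA]) auto
  then have ey: "y = sum (grcomp G y) ?A"
    using gd_prop[OF assms(1), of y] by simp
  have "x + y = sum (\<lambda>i. grcomp G x i + grcomp G y i) ?A"
    using ex ey by (simp add: sum.distrib)
  also have "grcomp G \<dots> = (\<lambda>i. grcomp G x i + grcomp G y i)"
    by (rule gd_char[OF assms(1) fA]) (auto intro: module.subspace_add[OF assms(2) gd_sub[OF assms(1)]] gd_in[OF assms(1)])
  finally show ?thesis .
qed

lemma gd_scale:
  assumes "graded_decomp sc G" "module sc"
  shows "grcomp G (sc a x) = (\<lambda>i. sc a (grcomp G x i))"
proof -
  let ?A = "{i. grcomp G x i \<noteq> 0}"
  have fA: "finite ?A" using gd_prop[OF assms(1)] by blast
  have "sc a x = sc a (sum (grcomp G x) ?A)" using gd_prop[OF assms(1), of x] by metis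
  also have "\<dots> = sum (\<lambda>i. sc a (grcomp G x i)) ?A"
    by (rule module.scale_sum_right[OF assms(2)])
  also have "grcomp G \<dots> = (\<lambda>i. sc a (grcomp G x i))"
    by (rule gd_char[OF assms(1) fA]) (auto intro: module.subspace_scale[OF assms(2) gd_sub[OF assms(1)]] gd_in[OF assms(1)] simp: module.scale_zero_right[OF assms(2)])
  finally show ?thesis .
qed

lemma gd_span:
  assumes "graded_decomp sc G" "module sc"
  shows "x \<in> module.span sc (\<Union>i. G i)"
proof -
  have "x = sum (grcomp G x) {i. grcomp G x i \<noteq> 0}" using gd_prop[OF assms(1)] by blast
  also have "\<dots> \<in> module.span sc (\<Union>i. G i)"
    by (rule module.span_sum[OF assms(2)]) (auto intro!: module.span_base[OF assms(2)] gd_in[OF assms(1)])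
  finally show ?thesis .
qed

lemma voa_vs: "is_VOA V \<Longrightarrow> module (vsc V)"
  unfolding is_VOA_def module_iff_vector_space by blast
lemma voa_lin_all: "is_VOA V \<Longrightarrow> \<forall>u n. Vector_Spaces.linear (vsc V) (vsc V) (vY V u n)"
  unfolding is_VOA_def by (elim conjE) assumption
lemma voa_lin: "is_VOA V \<Longrightarrow> Vector_Spaces.linear (vsc V) (vsc V) (vY V u n)"
  using voa_lin_all by blast
lemma voa_gd: "is_VOA V \<Longrightarrow> graded_decomp (vsc V) (Vgr V)"
  unfolding is_VOA_def by blast
lemma voa_vir: "is_VOA V \<Longrightarrow> \<exists>c::complex. \<forall>m n v. vL V m (vL V n v) - vL V n (vL V m v) =
        vsc V (of_int (m - n)) (vL V (m + n) v)
        + (if m + n = 0 then vsc V ((of_int m ^ 3 - of_int m) / 12 * c) v else 0)"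
  unfolding is_VOA_def by blast
lemma voa_omega: "is_VOA V \<Longrightarrow> omega V \<in> Vgr V 2"
  unfolding is_VOA_def by blast

lemma dm_vs: "is_disc_module V W \<Longrightarrow> module (msc W)"
  unfolding is_disc_module_def module_iff_vector_space by blast
lemma dm_linu: "is_disc_module V W \<Longrightarrow> Vector_Spaces.linear (vsc V) (msc W) (\<lambda>u. mY W u n w)"
  unfolding is_disc_module_def by blast
lemma dm_linw: "is_disc_module V W \<Longrightarrow> Vector_Spaces.linear (msc W) (msc W) (mY W u n)"
  unfolding is_disc_module_def by blast
lemma dm_gd: "is_disc_module V W \<Longrightarrow> graded_decomp (msc W) (Wgr V W)"
  unfolding is_disc_module_def by blast
lemma dm_Lm1: "is_disc_module V W \<Longrightarrow> mY W (vL V (-1) u) n w = msc W (- of_int n) (mY W u (n - 1) w)"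
  unfolding is_disc_module_def by blast
lemma dm_jac: "is_disc_module V W \<Longrightarrow>
       fsum (\<lambda>i::nat. msc W (of_int m gchoose i) (mY W (vY V u (l + int i) v) (m + n - int i) w)) =
       fsum (\<lambda>i::nat. msc W ((-1) ^ i * (of_int l gchoose i))
          (mY W u (m + l - int i) (mY W v (n + int i) w)
           - msc W ((-1) powi l) (mY W v (l + n - int i) (mY W u (m + int i) w))))"
  unfolding is_disc_module_def by blast

lemma gch1: "i \<noteq> 0 \<Longrightarrow> i \<noteq> 1 \<Longrightarrow> ((1::complex) gchoose i) = 0"
  using binomial_gbinomial[of 1 i, where 'a=complex] by (simp add: binomial_eq_0)

section \<open>weights\<close>

lemma wt_Y:
  assumes V: "is_VOA V" and W: "is_disc_module V W"
    and v: "v \<in> Vgr V p" and w: "w \<in> Wgr V W s"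
  shows "mY W v n w \<in> Wgr V W (s + of_int p - of_int n - 1)"
proof -
  interpret m: module "msc W" using dm_vs[OF W] .
  let ?Y = "mY W v n w"
  let ?w = "omega V"
  have L0v: "vY V ?w 1 v = vsc V (of_int p) v" using v by (simp add: Vgr_def vL_def)
  have L0w: "mY W ?w 1 w = msc W (of_real s) w" using w by (simp add: Wgr_def mL_def)
  have J: "fsum (\<lambda>i::nat. msc W (of_int 1 gchoose i) (mY W (vY V ?w (0 + int i) v) (1 + n - int i) w)) =
       fsum (\<lambda>i::nat. msc W ((-1) ^ i * (of_int 0 gchoose i))
          (mY W ?w (1 + 0 - int i) (mY W v (n + int i) w)
           - msc W ((-1) powi 0) (mY W v (0 + n - int i) (mY W ?w (1 + int i) w))))"
    by (rule dm_jac[OF W])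
  have lhs: "fsum (\<lambda>i::nat. msc W (of_int 1 gchoose i) (mY W (vY V ?w (0 + int i) v) (1 + n - int i) w))
     = mY W (vY V ?w 0 v) (1 + n) w + mY W (vY V ?w 1 v) n w"
    by (subst fsum_eq[of "{0,1}"]) (auto simp: gch1)
  have rhs: "fsum (\<lambda>i::nat. msc W ((-1) ^ i * (of_int 0 gchoose i))
          (mY W ?w (1 + 0 - int i) (mY W v (n + int i) w)
           - msc W ((-1) powi 0) (mY W v (0 + n - int i) (mY W ?w (1 + int i) w))))
     = mY W ?w 1 ?Y - mY W v n (mY W ?w 1 w)"
    by (subst fsum_eq[of "{0}"]) (auto simp: gbinomial_0_left)
  have a: "mY W (vY V ?w 0 v) (1 + n) w = msc W (- of_int (1 + n)) ?Y"
    using dm_Lm1[OF W, of v "1 + n" w] by (simp add: vL_def)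
  have b: "mY W (vY V ?w 1 v) n w = msc W (of_int p) ?Y"
    unfolding L0v by (rule lin_scale[OF dm_linu[OF W]])
  have c: "mY W v n (mY W ?w 1 w) = msc W (of_real s) ?Y"
    unfolding L0w by (rule lin_scale[OF dm_linw[OF W]])
  have e: "mY W (vY V ?w 0 v) (1 + n) w + mY W (vY V ?w 1 v) n w = mY W ?w 1 ?Y - mY W v n (mY W ?w 1 w)"
    using J unfolding lhs rhs .
  have "mY W ?w 1 ?Y = msc W (- of_int (1 + n)) ?Y + msc W (of_int p) ?Y + msc W (of_real s) ?Y"
    using e unfolding a b c by (metis diff_add_cancel)
  also have "\<dots> = msc W (- of_int (1 + n) + of_int p + of_real s) ?Y"
    by (simp only: m.scale_left_distrib)
  also have "(- of_int (1 + n) + of_int p + of_real s) = (of_real (s + of_int p - of_int n - 1) :: complex)"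
    by simp
  finally show ?thesis by (simp add: Wgr_def mL_def)
qed



lemma Vgr_sub: "is_VOA V \<Longrightarrow> module.subspace (vsc V) (Vgr V n)"
  by (rule gd_sub[OF voa_gd])
lemma Wgr_sub: "is_disc_module V W \<Longrightarrow> module.subspace (msc W) (Wgr V W r)"
  by (rule gd_sub[OF dm_gd])
lemma Wgr_0: "is_disc_module V W \<Longrightarrow> 0 \<in> Wgr V W r"
  by (rule module.subspace_0[OF dm_vs Wgr_sub])
lemma Vgr_0: "is_VOA V \<Longrightarrow> 0 \<in> Vgr V r"
  by (rule module.subspace_0[OF voa_vs Vgr_sub])
lemma Wgr_eq: "x \<in> Wgr V W a \<Longrightarrow> a = b \<Longrightarrow> x \<in> Wgr V W b" by simp

lemma vL1_wt:
  assumes V: "is_VOA V" and x: "x \<in> Vgr V m"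
  shows "vL V 1 x \<in> Vgr V (m - 1)"
proof -
  interpret m: module "vsc V" using voa_vs[OF V] .
  obtain c where vir: "\<forall>m n v. vL V m (vL V n v) - vL V n (vL V m v) =
        vsc V (of_int (m - n)) (vL V (m + n) v)
        + (if m + n = 0 then vsc V ((of_int m ^ 3 - of_int m) / 12 * c) v else 0)"
    using voa_vir[OF V] by blast
  have e: "vL V 0 (vL V 1 x) - vL V 1 (vL V 0 x) = vsc V (-1) (vL V 1 x)"
    using vir[rule_format, of 0 1 x] by simp
  have x0: "vL V 0 x = vsc V (of_int m) x" using x by (simp add: Vgr_def)
  have "vL V 1 (vL V 0 x) = vsc V (of_int m) (vL V 1 x)"
    by (simp only: x0) (simp add: vL_def lin_scale[OF voa_lin[OF V]])
  with e have "vL V 0 (vL V 1 x) = vsc V (of_int m) (vL V 1 x) + vsc V (-1) (vL V 1 x)"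
    by (metis diff_add_cancel add.commute)
  also have "\<dots> = vsc V (of_int (m - 1)) (vL V 1 x)"
    by (simp only: m.scale_left_distrib[symmetric]) simp
  finally show ?thesis by (simp add: Vgr_def)
qed

lemma vL1_pow_wt:
  assumes V: "is_VOA V" and x: "x \<in> Vgr V m"
  shows "(vL V 1 ^^ j) x \<in> Vgr V (m - int j)"
proof (induct j)
  case 0 then show ?case using x by simp
next
  case (Suc j)
  then show ?case using vL1_wt[OF V Suc] by (simp add: algebra_simps)
qed

lemma vL1_pow_0: "is_VOA V \<Longrightarrow> (vL V 1 ^^ j) 0 = 0"
  by (induct j) (simp_all add: vL_def lin_zero[OF voa_lin])

lemma mL1_wt:
  assumes V: "is_VOA V" and W: "is_disc_module V W" and y: "y \<in> Wgr V W t"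
  shows "mL V W 1 y \<in> Wgr V W (t - 1)"
  unfolding mL_def using wt_Y[OF V W voa_omega[OF V] y, of 2] by (simp add: algebra_simps)

lemma mL1_pow_wt:
  assumes V: "is_VOA V" and W: "is_disc_module V W" and y: "y \<in> Wgr V W t"
  shows "(mL V W 1 ^^ i) y \<in> Wgr V W (t - real i)"
proof (induct i)
  case 0 then show ?case using y by simp
next
  case (Suc i)
  then show ?case using mL1_wt[OF V W Suc] by (simp add: algebra_simps)
qed

lemma grcomp_homog:
  assumes V: "is_VOA V" and u: "u \<in> Vgr V p"
  shows "grcomp (Vgr V) u m = (if m = p then u else 0)"
  using gd_homog[OF voa_gd[OF V] voa_vs[OF V] u] by simp

lemma grcomp_in:
  assumes V: "is_VOA V" and u: "u \<in> Vgr V p"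
  shows "grcomp (Vgr V) u m \<in> Vgr V p"
  using grcomp_homog[OF V u, of m] u Vgr_0[OF V] by auto

lemma Ygr_wt:
  assumes V: "is_VOA V" and W: "is_disc_module V W" and u: "u \<in> Vgr V p" and y: "y \<in> Wgr V W t"
  shows "mY W (grcomp (Vgr V) u m) k y \<in> Wgr V W (t + of_int p - of_int k - 1)"
  by (rule wt_Y[OF V W grcomp_in[OF V u] y])

lemma ustar_wt:
  assumes V: "is_VOA V" and W: "is_disc_module V W" and u: "u \<in> Vgr V p" and w: "w \<in> Wgr V W s"
  shows "ustar V W u n w \<in> Wgr V W (s - of_int p + of_int n + 1)"
proof -
  interpret m: module "msc W" using dm_vs[OF W] .
  have S: "m.subspace (Wgr V W (s - of_int p + of_int n + 1))" by (rule Wgr_sub[OF W])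
  show ?thesis
    unfolding ustar_def
  proof (rule fsum_in[OF m.module_axioms S], rule m.subspace_scale[OF S], rule fsum_in[OF m.module_axioms S],
         rule m.subspace_scale[OF S])
    fix m' :: int and j :: nat
    show "mY W ((vL V 1 ^^ j) (grcomp (Vgr V) u m')) (2 * m' - int j - n - 2) w \<in> Wgr V W (s - of_int p + of_int n + 1)"
    proof (cases "m' = p")
      case True
      have "(vL V 1 ^^ j) u \<in> Vgr V (p - int j)" by (rule vL1_pow_wt[OF V u])
      from wt_Y[OF V W this w, of "2 * p - int j - n - 2"]
      show ?thesis using True grcomp_homog[OF V u, of m'] by (auto elim!: Wgr_eq)
    next
      case False
      then show ?thesis using grcomp_homog[OF V u, of m'] Wgr_0[OF W]
        by (simp add: vL1_pow_0[OF V] lin_zero[OF dm_linu[OF W]])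
    qed
  qed
qed



definition Gsp :: "'v::ab_group_add voa \<Rightarrow> ('v, 'w::ab_group_add) vmod \<Rightarrow> real \<Rightarrow> 'w set" where
  "Gsp V W s = module.span (msc W) {mY W u (-1) w | u w p. p > 0 \<and> u \<in> Vgr V p \<and> w \<in> Wgr V W (s - of_int p)}"

lemma QS_sub:
  assumes V: "is_VOA V" and W: "is_disc_module V W"
  shows "module.subspace (msc W) {x. \<forall>s\<in>S. grcomp (Wgr V W) x s \<in> Gsp V W s}"
proof -
  interpret m: module "msc W" using dm_vs[OF W] .
  have g0: "grcomp (Wgr V W) 0 = (\<lambda>i. 0)"
    using gd_homog[OF dm_gd[OF W] m.module_axioms Wgr_0[OF W, of 0]] by simp
  show ?thesis
    unfolding m.subspace_def Gsp_def
    by (auto simp: g0 gd_add[OF dm_gd[OF W] m.module_axioms] gd_scale[OF dm_gd[OF W] m.module_axioms]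
        intro: m.span_zero m.span_add m.span_scale)
qed

lemma C1_claim:
  assumes V: "is_VOA V" and W: "is_disc_module V W" and C: "C1_cofinite V W"
  shows "\<exists>M::real. \<forall>s > M. \<forall>w \<in> Wgr V W s. w \<in> Gsp V W s"
proof -
  interpret m: module "msc W" using dm_vs[OF W] .
  interpret v: module "vsc V" using voa_vs[OF V] .
  have gd: "graded_decomp (msc W) (Wgr V W)" by (rule dm_gd[OF W])
  obtain B where fB: "finite B" and BU: "m.span (B \<union> C1 V W) = UNIV"
    using C unfolding C1_cofinite_def by blast
  let ?Ms = "\<Union>b\<in>B. {i. grcomp (Wgr V W) b i \<noteq> 0}"
  have fMs: "finite ?Ms" using fB gd_prop[OF gd] by blast
  define M where "M = Max (insert 0 ?Ms)"
  have Mge: "i \<le> M" if "i \<in> ?Ms" for i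
    unfolding M_def using fMs that by simp
  let ?Q = "{x. \<forall>s\<in>{s. s > M}. grcomp (Wgr V W) x s \<in> Gsp V W s}"
  let ?Q' = "{x. \<forall>s\<in>UNIV. grcomp (Wgr V W) x s \<in> Gsp V W s}"
  have sQ: "m.subspace ?Q" by (rule QS_sub[OF V W])
  have sQ': "m.subspace ?Q'" by (rule QS_sub[OF V W])
  have BQ: "B \<subseteq> ?Q"
  proof
    fix b assume b: "b \<in> B"
    show "b \<in> ?Q"
    proof (clarsimp)
      fix s assume "M < s"
      then have "grcomp (Wgr V W) b s = 0" using Mge[of s] b by force
      then show "grcomp (Wgr V W) b s \<in> Gsp V W s" by (simp add: Gsp_def m.span_zero)
    qed
  qed
  have homQ: "mY W u (-1) w \<in> ?Q'" if u: "u \<in> Vgr V p" and p: "p > 0" for u p w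
  proof -
    have X: "m.subspace {w. mY W u (-1) w \<in> ?Q'}"
      unfolding m.subspace_def
      using m.subspace_0[OF sQ'] m.subspace_add[OF sQ'] m.subspace_scale[OF sQ']
      by (auto simp: lin_zero[OF dm_linw[OF W]] lin_add[OF dm_linw[OF W]] lin_scale[OF dm_linw[OF W]])
    have "(\<Union>t. Wgr V W t) \<subseteq> {w. mY W u (-1) w \<in> ?Q'}"
    proof
      fix w assume "w \<in> (\<Union>t. Wgr V W t)"
      then obtain t where w: "w \<in> Wgr V W t" by blast
      have Yw: "mY W u (-1) w \<in> Wgr V W (t + of_int p)"
        using wt_Y[OF V W u w, of "-1"] by simp
      show "w \<in> {w. mY W u (-1) w \<in> ?Q'}"
      proof -
          have A: "mY W u (- 1) w \<in> Gsp V W (t + real_of_int p)"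
            unfolding Gsp_def
            by (rule m.span_base, rule CollectI, rule exI[of _ u], rule exI[of _ w], rule exI[of _ p]) (simp add: u p w)
          have B: "0 \<in> Gsp V W s" for s unfolding Gsp_def by (rule m.span_zero)
          show ?thesis using A B by (simp add: gd_homog[OF gd m.module_axioms Yw])
      qed
    qed
    then have "m.span (\<Union>t. Wgr V W t) \<subseteq> {w. mY W u (-1) w \<in> ?Q'}"
      by (rule m.span_minimal[OF _ X])
    then show ?thesis using gd_span[OF gd m.module_axioms, of w] by blast
  qed
  have U: "v.subspace {u. \<forall>w. mY W u (-1) w \<in> ?Q'}"
    unfolding v.subspace_def
    using m.subspace_0[OF sQ'] m.subspace_add[OF sQ'] m.subspace_scale[OF sQ']
    by (auto simp: lin_zero[OF dm_linu[OF W]] lin_add[OF dm_linu[OF W]] lin_scale[OF dm_linu[OF W]])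
  have "Vplus V \<subseteq> {u. \<forall>w. mY W u (-1) w \<in> ?Q'}"
    unfolding Vplus_def by (rule v.span_minimal[OF _ U]) (use homQ in blast)
  then have "{mY W u (-1) w | u w. u \<in> Vplus V} \<subseteq> ?Q" by auto
  then have "C1 V W \<subseteq> ?Q" unfolding C1_def by (rule m.span_minimal[OF _ sQ])
  with BQ have "m.span (B \<union> C1 V W) \<subseteq> ?Q" by (intro m.span_minimal[OF _ sQ]) auto
  then have allQ: "x \<in> ?Q" for x using BU by auto
  show ?thesis
  proof (intro exI allI impI ballI)
    fix s w assume s: "M < s" and w: "w \<in> Wgr V W s"
    have "grcomp (Wgr V W) w s \<in> Gsp V W s" using allQ[of w] s by auto
    then show "w \<in> Gsp V W s" using gd_homog[OF gd m.module_axioms w] by simp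
  qed
qed



locale setup4 =
  fixes V :: "'v::ab_group_add voa"
    and W0 :: "('v, 'a::ab_group_add) vmod" and W1 :: "('v, 'b::ab_group_add) vmod"
    and W2 :: "('v, 'c::ab_group_add) vmod" and W3 :: "('v, 'd::ab_group_add) vmod"
  assumes V: "is_VOA V"
    and M0: "is_disc_module V W0" and M1: "is_disc_module V W1"
    and M2: "is_disc_module V W2" and M3: "is_disc_module V W3"
begin

abbreviation "S \<equiv> FT V W0 W1 W2 W3"
abbreviation "J \<equiv> Jsp V W0 W1 W2 W3"
abbreviation "T \<equiv> Tsp W0 W1 W2 W3"
abbreviation "tn \<equiv> ten W0 W1 W2 W3"

lemma mT: "module (scT :: complex \<Rightarrow> ('a,'b,'c,'d) tel \<Rightarrow> _)" by (rule module_scT)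

lemma S_sub: "module.subspace scT (S r)"
  unfolding FT_def by (rule module.subspace_span[OF mT])
lemma J_sub: "module.subspace scT J"
  unfolding Jsp_def by (rule module.subspace_span[OF mT])
lemma T_sub: "module.subspace scT T"
  unfolding Tsp_def by (rule module.subspace_span[OF mT])

lemma ten_FT:
  assumes f: "isMon f" and w: "w0 \<in> Wgr V W0 r0" "w1 \<in> Wgr V W1 r1" "w2 \<in> Wgr V W2 r2" "w3 \<in> Wgr V W3 r3"
    and r: "r0 + r1 + r2 + r3 \<le> r"
  shows "tn f w0 w1 w2 w3 \<in> S r"
proof -
  obtain c a b e where fe: "\<And>z1 z2. z1 \<noteq> 0 \<Longrightarrow> z2 \<noteq> 0 \<Longrightarrow> z1 \<noteq> z2 \<Longrightarrow> f z1 z2 = c * Rmon a b e z1 z2"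
    using f unfolding isMon_def by blast
  have "tn f w0 w1 w2 w3 = tn (\<lambda>z1 z2. c * Rmon a b e z1 z2) w0 w1 w2 w3"
    by (rule ten_cong) (rule fe)
  also have "\<dots> = scT c (tn (Rmon a b e) w0 w1 w2 w3)" by (rule ten_scal)
  also have "\<dots> \<in> S r" unfolding FT_def
    by (rule module.span_scale[OF mT], rule module.span_base[OF mT], rule CollectI,
        rule exI[of _ a], rule exI[of _ b], rule exI[of _ e], rule exI[of _ w0], rule exI[of _ w1],
        rule exI[of _ w2], rule exI[of _ w3], rule exI[of _ r0], rule exI[of _ r1], rule exI[of _ r2],
        rule exI[of _ r3]) (simp add: w r)
  finally show ?thesis .
qed

lemma ten_T:
  assumes f: "isMon f"
  shows "tn f w0 w1 w2 w3 \<in> T"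
proof -
  obtain c a b e where fe: "\<And>z1 z2. z1 \<noteq> 0 \<Longrightarrow> z2 \<noteq> 0 \<Longrightarrow> z1 \<noteq> z2 \<Longrightarrow> f z1 z2 = c * Rmon a b e z1 z2"
    using f unfolding isMon_def by blast
  have "tn f w0 w1 w2 w3 = tn (\<lambda>z1 z2. c * Rmon a b e z1 z2) w0 w1 w2 w3"
    by (rule ten_cong) (rule fe)
  also have "\<dots> = scT c (tn (Rmon a b e) w0 w1 w2 w3)" by (rule ten_scal)
  also have "\<dots> \<in> T" unfolding Tsp_def
    by (rule module.span_scale[OF mT], rule module.span_base[OF mT]) blast
  finally show ?thesis .
qed

lemma RT:
  assumes f: "isMon f" and w: "w0 \<in> Wgr V W0 r0" "w1 \<in> Wgr V W1 r1" "w2 \<in> Wgr V W2 r2" "w3 \<in> Wgr V W3 r3"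
    and r: "r0 + r1 + r2 + r3 \<le> r"
  shows "Rmul a b e (tn f w0 w1 w2 w3) \<in> S r"
  unfolding Rmul_ten by (rule ten_FT[OF _ w r]) (intro isMon_intros f)

lemma RT_T:
  assumes f: "isMon f"
  shows "Rmul a b e (tn f w0 w1 w2 w3) \<in> T"
  unfolding Rmul_ten by (rule ten_T) (intro isMon_intros f)

lemma Rmain: "Rmul a b e (tn (\<lambda>z1 z2. 1) w0 w1 w2 w3) = tn (Rmon a b e) w0 w1 w2 w3"
  unfolding Rmul_ten by simp

lemma caseA:
  assumes u: "u \<in> Vgr V p" and p: "p > 0"
    and w: "w0 \<in> Wgr V W0 r0" "w \<in> Wgr V W1 q" "w2 \<in> Wgr V W2 r2" "w3 \<in> Wgr V W3 r3"
    and rho: "rho = r0 + (q + of_int p) + r2 + r3"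
  shows "tn (Rmon a b e) w0 (mY W1 u (-1) w) w2 w3 + Rmul a b e (genA V W0 W1 W2 W3 u w0 w w2 w3) \<in> S (rho - 1)"
proof -
  interpret t: module "scT :: complex \<Rightarrow> ('a,'b,'c,'d) tel \<Rightarrow> _" by (rule mT)
  have p1: "real_of_int p \<ge> 1" using p by simp
  have sub: "t.subspace (S (rho - 1))" by (rule S_sub)
  have e: "tn (Rmon a b e) w0 (mY W1 u (-1) w) w2 w3 + Rmul a b e (genA V W0 W1 W2 W3 u w0 w w2 w3)
    = Rmul a b e (fsum (\<lambda>k::nat. tn (\<lambda>z1 z2. ((-1) gchoose k) * (- z1) ^ k)
                       (ustar V W0 u (-1 - int k) w0) w w2 w3))
     - Rmul a b e (fsum (\<lambda>k::nat. tn (\<lambda>z1 z2. ((-1) gchoose k) * (- (z1 - z2)) powi (-1 - int k))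
                       w0 w (mY W2 u (int k) w2) w3))
     - Rmul a b e (fsum (\<lambda>k::nat. tn (\<lambda>z1 z2. ((-1) gchoose k) * (- z1) powi (-1 - int k))
                       w0 w w2 (mY W3 u (int k) w3)))"
    unfolding genA_def Rmul_diff Rmain by simp
  show ?thesis unfolding e
  proof (intro t.subspace_diff[OF sub] Rmul_fsum_in[OF sub])
    fix k :: nat
    show "Rmul a b e (tn (\<lambda>z1 z2. ((-1) gchoose k) * (- z1) ^ k) (ustar V W0 u (-1 - int k) w0) w w2 w3) \<in> S (rho - 1)"
      by (rule RT[OF _ ustar_wt[OF V M0 u w(1)] w(2-4)]) (intro isMon_intros, use rho p1 in simp)
    show "Rmul a b e (tn (\<lambda>z1 z2. ((-1) gchoose k) * (- (z1 - z2)) powi (-1 - int k)) w0 w (mY W2 u (int k) w2) w3) \<in> S (rho - 1)"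
      by (rule RT[OF _ w(1,2) wt_Y[OF V M2 u w(3)] w(4)]) (intro isMon_intros, use rho p1 in simp)
    show "Rmul a b e (tn (\<lambda>z1 z2. ((-1) gchoose k) * (- z1) powi (-1 - int k)) w0 w w2 (mY W3 u (int k) w3)) \<in> S (rho - 1)"
      by (rule RT[OF _ w(1,2,3) wt_Y[OF V M3 u w(4)]]) (intro isMon_intros, use rho p1 in simp)
  qed
qed

lemma caseB:
  assumes u: "u \<in> Vgr V p" and p: "p > 0"
    and w: "w0 \<in> Wgr V W0 r0" "w1 \<in> Wgr V W1 r1" "w \<in> Wgr V W2 q" "w3 \<in> Wgr V W3 r3"
    and rho: "rho = r0 + r1 + (q + of_int p) + r3"
  shows "tn (Rmon a b e) w0 w1 (mY W2 u (-1) w) w3 + Rmul a b e (genB V W0 W1 W2 W3 u w0 w1 w w3) \<in> S (rho - 1)"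
proof -
  interpret t: module "scT :: complex \<Rightarrow> ('a,'b,'c,'d) tel \<Rightarrow> _" by (rule mT)
  have p1: "real_of_int p \<ge> 1" using p by simp
  have sub: "t.subspace (S (rho - 1))" by (rule S_sub)
  have e: "tn (Rmon a b e) w0 w1 (mY W2 u (-1) w) w3 + Rmul a b e (genB V W0 W1 W2 W3 u w0 w1 w w3)
    = Rmul a b e (fsum (\<lambda>k::nat. tn (\<lambda>z1 z2. ((-1) gchoose k) * (- z2) ^ k)
                       (ustar V W0 u (-1 - int k) w0) w1 w w3))
     - Rmul a b e (fsum (\<lambda>k::nat. tn (\<lambda>z1 z2. ((-1) gchoose k) * (z1 - z2) powi (-1 - int k))
                       w0 (mY W1 u (int k) w1) w w3))
     - Rmul a b e (fsum (\<lambda>k::nat. tn (\<lambda>z1 z2. ((-1) gchoose k) * (- z2) powi (-1 - int k))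
                       w0 w1 w (mY W3 u (int k) w3)))"
    unfolding genB_def Rmul_diff Rmain by simp
  show ?thesis unfolding e
  proof (intro t.subspace_diff[OF sub] Rmul_fsum_in[OF sub])
    fix k :: nat
    show "Rmul a b e (tn (\<lambda>z1 z2. ((-1) gchoose k) * (- z2) ^ k) (ustar V W0 u (-1 - int k) w0) w1 w w3) \<in> S (rho - 1)"
      by (rule RT[OF _ ustar_wt[OF V M0 u w(1)] w(2-4)]) (intro isMon_intros, use rho p1 in simp)
    show "Rmul a b e (tn (\<lambda>z1 z2. ((-1) gchoose k) * (z1 - z2) powi (-1 - int k)) w0 (mY W1 u (int k) w1) w w3) \<in> S (rho - 1)"
      by (rule RT[OF _ w(1) wt_Y[OF V M1 u w(2)] w(3,4)]) (intro isMon_intros, use rho p1 in simp)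
    show "Rmul a b e (tn (\<lambda>z1 z2. ((-1) gchoose k) * (- z2) powi (-1 - int k)) w0 w1 w (mY W3 u (int k) w3)) \<in> S (rho - 1)"
      by (rule RT[OF _ w(1,2,3) wt_Y[OF V M3 u w(4)]]) (intro isMon_intros, use rho p1 in simp)
  qed
qed

lemma caseC:
  assumes u: "u \<in> Vgr V p" and p: "p > 0"
    and w: "w0 \<in> Wgr V W0 r0" "w1 \<in> Wgr V W1 r1" "w2 \<in> Wgr V W2 r2" "w \<in> Wgr V W3 q"
    and rho: "rho = r0 + r1 + r2 + (q + of_int p)"
  shows "tn (Rmon a b e) w0 w1 w2 (mY W3 u (-1) w) + Rmul a b e (genC V W0 W1 W2 W3 u w0 w1 w2 w) \<in> S (rho - 1)"
proof -
  interpret t: module "scT :: complex \<Rightarrow> ('a,'b,'c,'d) tel \<Rightarrow> _" by (rule mT)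
  have p1: "real_of_int p \<ge> 1" using p by simp
  have sub: "t.subspace (S (rho - 1))" by (rule S_sub)
  have e: "tn (Rmon a b e) w0 w1 w2 (mY W3 u (-1) w) + Rmul a b e (genC V W0 W1 W2 W3 u w0 w1 w2 w)
    = Rmul a b e (tn (\<lambda>z1 z2. 1) (ustar V W0 u (-1) w0) w1 w2 w)
     - Rmul a b e (fsum (\<lambda>k::nat. tn (\<lambda>z1 z2. ((-1) gchoose k) * z1 powi (-1 - int k))
                       w0 (mY W1 u (int k) w1) w2 w))
     - Rmul a b e (fsum (\<lambda>k::nat. tn (\<lambda>z1 z2. ((-1) gchoose k) * z2 powi (-1 - int k))
                       w0 w1 (mY W2 u (int k) w2) w))"
    unfolding genC_def Rmul_diff Rmain by simp
  show ?thesis unfolding e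
  proof (intro t.subspace_diff[OF sub] Rmul_fsum_in[OF sub])
    show "Rmul a b e (tn (\<lambda>z1 z2. 1) (ustar V W0 u (-1) w0) w1 w2 w) \<in> S (rho - 1)"
      by (rule RT[OF _ ustar_wt[OF V M0 u w(1)] w(2-4)]) (intro isMon_intros, use rho p1 in simp)
    fix k :: nat
    show "Rmul a b e (tn (\<lambda>z1 z2. ((-1) gchoose k) * z1 powi (-1 - int k)) w0 (mY W1 u (int k) w1) w2 w) \<in> S (rho - 1)"
      by (rule RT[OF _ w(1) wt_Y[OF V M1 u w(2)] w(3,4)]) (intro isMon_intros, use rho p1 in simp)
    show "Rmul a b e (tn (\<lambda>z1 z2. ((-1) gchoose k) * z2 powi (-1 - int k)) w0 w1 (mY W2 u (int k) w2) w) \<in> S (rho - 1)"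
      by (rule RT[OF _ w(1,2) wt_Y[OF V M2 u w(3)] w(4)]) (intro isMon_intros, use rho p1 in simp)
  qed
qed

lemma caseD:
  assumes u: "u \<in> Vgr V p" and p: "p > 0"
    and w: "w \<in> Wgr V W0 q" "w1 \<in> Wgr V W1 r1" "w2 \<in> Wgr V W2 r2" "w3 \<in> Wgr V W3 r3"
    and rho: "rho = (q + of_int p) + r1 + r2 + r3"
  shows "tn (Rmon a b e) (mY W0 u (-1) w) w1 w2 w3 - Rmul a b e (genD V W0 W1 W2 W3 u w w1 w2 w3) \<in> S (rho - 1)"
proof -
  interpret t: module "scT :: complex \<Rightarrow> ('a,'b,'c,'d) tel \<Rightarrow> _" by (rule mT)
  have p1: "real_of_int p \<ge> 1" using p by simp
  have sub: "t.subspace (S (rho - 1))" by (rule S_sub)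
  have e: "tn (Rmon a b e) (mY W0 u (-1) w) w1 w2 w3 - Rmul a b e (genD V W0 W1 W2 W3 u w w1 w2 w3)
    = Rmul a b e (Dterm1 V W0 W1 W2 W3 u w w1 w2 w3) + Rmul a b e (Dterm2 V W0 W1 W2 W3 u w w1 w2 w3)
     + Rmul a b e (tn (\<lambda>z1 z2. 1) w w1 w2 (ustar V W3 u (-1) w3))"
    unfolding genD_def Rmul_diff Rmain by (simp add: algebra_simps)
  have D1: "Rmul a b e (Dterm1 V W0 W1 W2 W3 u w w1 w2 w3) \<in> S (rho - 1)"
    unfolding Dterm1_def
  proof (intro Rmul_fsum_in[OF sub])
    fix k :: nat and m :: int and i j :: nat
    show "Rmul a b e (tn (\<lambda>z1 z2. ((-1) gchoose k) * z1 ^ (1 + k) * (- (z1 ^ 2)) powi (m - int k - 1)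
                    * (z1 powi (- int i) / fact i) * ((- z1) powi (- int j) / fact j))
         w ((mL V W1 1 ^^ i) (mY W1 (grcomp (Vgr V) u m) (int k) ((mL V W1 1 ^^ j) w1))) w2 w3) \<in> S (rho - 1)"
      by (rule RT[OF _ w(1) mL1_pow_wt[OF V M1 Ygr_wt[OF V M1 u mL1_pow_wt[OF V M1 w(2)]]] w(3,4)])
         (intro isMon_intros, use rho p1 in simp)
  qed
  have D2: "Rmul a b e (Dterm2 V W0 W1 W2 W3 u w w1 w2 w3) \<in> S (rho - 1)"
    unfolding Dterm2_def
  proof (intro Rmul_fsum_in[OF sub])
    fix k :: nat and m :: int and i j :: nat
    show "Rmul a b e (tn (\<lambda>z1 z2. ((-1) gchoose k) * z2 ^ (1 + k) * (- (z2 ^ 2)) powi (m - int k - 1)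
                    * (z2 powi (- int i) / fact i) * ((- z2) powi (- int j) / fact j))
         w w1 ((mL V W2 1 ^^ i) (mY W2 (grcomp (Vgr V) u m) (int k) ((mL V W2 1 ^^ j) w2))) w3) \<in> S (rho - 1)"
      by (rule RT[OF _ w(1,2) mL1_pow_wt[OF V M2 Ygr_wt[OF V M2 u mL1_pow_wt[OF V M2 w(3)]]] w(4)])
         (intro isMon_intros, use rho p1 in simp)
  qed
  have D3: "Rmul a b e (tn (\<lambda>z1 z2. 1) w w1 w2 (ustar V W3 u (-1) w3)) \<in> S (rho - 1)"
    by (rule RT[OF _ w(1-3) ustar_wt[OF V M3 u w(4)]]) (intro isMon_intros, use rho p1 in simp)
  show ?thesis unfolding e by (intro t.subspace_add[OF sub] D1 D2 D3)
qed

end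


lemma setplus_sub:
  assumes m: "module sc" and A: "module.subspace sc A" and B: "module.subspace sc B"
  shows "module.subspace sc (setplus A B)"
proof -
  interpret m: module sc by (rule m)
  show ?thesis unfolding m.subspace_def setplus_def
  proof (intro conjI ballI allI)
    show "0 \<in> {x + y |x y. x \<in> A \<and> y \<in> B}"
      using m.subspace_0[OF A] m.subspace_0[OF B] by force
  next
    fix x y assume "x \<in> {x + y |x y. x \<in> A \<and> y \<in> B}" "y \<in> {x + y |x y. x \<in> A \<and> y \<in> B}"
    then obtain a b a' b' where "x = a + b" "y = a' + b'" "a \<in> A" "b \<in> B" "a' \<in> A" "b' \<in> B" by blast
    then show "x + y \<in> {x + y |x y. x \<in> A \<and> y \<in> B}"
      using m.subspace_add[OF A] m.subspace_add[OF B]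
      by (intro CollectI exI[of _ "a + a'"] exI[of _ "b + b'"]) (simp add: algebra_simps)
  next
    fix c x assume "x \<in> {x + y |x y. x \<in> A \<and> y \<in> B}"
    then obtain a b where "x = a + b" "a \<in> A" "b \<in> B" by blast
    then show "sc c x \<in> {x + y |x y. x \<in> A \<and> y \<in> B}"
      using m.subspace_scale[OF A] m.subspace_scale[OF B]
      by (intro CollectI exI[of _ "sc c a"] exI[of _ "sc c b"]) (simp add: m.scale_right_distrib)
  qed
qed

context setup4 begin

lemma Vplus_in: "u \<in> Vgr V p \<Longrightarrow> p > 0 \<Longrightarrow> u \<in> Vplus V"
  unfolding Vplus_def by (rule module.span_base[OF voa_vs[OF V]]) blast

lemma RJ: "u \<in> Vplus V \<Longrightarrow> g \<in> {genA, genB, genC, genD} \<Longrightarrow> Rmul a b e (g V W0 W1 W2 W3 u w0 w1 w2 w3) \<in> J"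
  unfolding Jsp_def gens_def
  by (rule module.span_base[OF mT]) blast

lemma lift0:
  assumes Z: "module.subspace scT Z" and X: "\<And>x. x \<in> X \<Longrightarrow> tn f x w1 w2 w3 \<in> Z" and y: "y \<in> module.span (msc W0) X"
  shows "tn f y w1 w2 w3 \<in> Z"
proof -
  interpret m: module "msc W0" by (rule dm_vs[OF M0])
  interpret t: module "scT :: complex \<Rightarrow> ('a,'b,'c,'d) tel \<Rightarrow> _" by (rule mT)
  have "m.subspace {x. tn f x w1 w2 w3 \<in> Z}"
    unfolding m.subspace_def using t.subspace_0[OF Z] t.subspace_add[OF Z] t.subspace_scale[OF Z]
    by (simp add: ten_zero0 ten_add0 ten_scale0)
  then have "m.span X \<subseteq> {x. tn f x w1 w2 w3 \<in> Z}" by (rule m.span_minimal[rotated]) (use X in blast)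
  then show ?thesis using y by blast
qed
lemma lift1:
  assumes Z: "module.subspace scT Z" and X: "\<And>x. x \<in> X \<Longrightarrow> tn f w0 x w2 w3 \<in> Z" and y: "y \<in> module.span (msc W1) X"
  shows "tn f w0 y w2 w3 \<in> Z"
proof -
  interpret m: module "msc W1" by (rule dm_vs[OF M1])
  interpret t: module "scT :: complex \<Rightarrow> ('a,'b,'c,'d) tel \<Rightarrow> _" by (rule mT)
  have "m.subspace {x. tn f w0 x w2 w3 \<in> Z}"
    unfolding m.subspace_def using t.subspace_0[OF Z] t.subspace_add[OF Z] t.subspace_scale[OF Z]
    by (simp add: ten_zero1 ten_add1 ten_scale1)
  then have "m.span X \<subseteq> {x. tn f w0 x w2 w3 \<in> Z}" by (rule m.span_minimal[rotated]) (use X in blast)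
  then show ?thesis using y by blast
qed
lemma lift2:
  assumes Z: "module.subspace scT Z" and X: "\<And>x. x \<in> X \<Longrightarrow> tn f w0 w1 x w3 \<in> Z" and y: "y \<in> module.span (msc W2) X"
  shows "tn f w0 w1 y w3 \<in> Z"
proof -
  interpret m: module "msc W2" by (rule dm_vs[OF M2])
  interpret t: module "scT :: complex \<Rightarrow> ('a,'b,'c,'d) tel \<Rightarrow> _" by (rule mT)
  have "m.subspace {x. tn f w0 w1 x w3 \<in> Z}"
    unfolding m.subspace_def using t.subspace_0[OF Z] t.subspace_add[OF Z] t.subspace_scale[OF Z]
    by (simp add: ten_zero2 ten_add2 ten_scale2)
  then have "m.span X \<subseteq> {x. tn f w0 w1 x w3 \<in> Z}" by (rule m.span_minimal[rotated]) (use X in blast)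
  then show ?thesis using y by blast
qed
lemma lift3:
  assumes Z: "module.subspace scT Z" and X: "\<And>x. x \<in> X \<Longrightarrow> tn f w0 w1 w2 x \<in> Z" and y: "y \<in> module.span (msc W3) X"
  shows "tn f w0 w1 w2 y \<in> Z"
proof -
  interpret m: module "msc W3" by (rule dm_vs[OF M3])
  interpret t: module "scT :: complex \<Rightarrow> ('a,'b,'c,'d) tel \<Rightarrow> _" by (rule mT)
  have "m.subspace {x. tn f w0 w1 w2 x \<in> Z}"
    unfolding m.subspace_def using t.subspace_0[OF Z] t.subspace_add[OF Z] t.subspace_scale[OF Z]
    by (simp add: ten_zero3 ten_add3 ten_scale3)
  then have "m.span X \<subseteq> {x. tn f w0 w1 w2 x \<in> Z}" by (rule m.span_minimal[rotated]) (use X in blast)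
  then show ?thesis using y by blast
qed

lemma S_mono: "r \<le> r' \<Longrightarrow> S r \<subseteq> S r'"
  unfolding FT_def by (rule module.span_mono[OF mT]) fastforce

definition Phi :: "int \<Rightarrow> real \<Rightarrow> bool" where
  "Phi M r \<longleftrightarrow> S r \<subseteq> setplus (J \<inter> S r) (S (real_of_int M))"

lemma Z_sub: "module.subspace scT (setplus (J \<inter> S r) (S M))"
  by (rule setplus_sub[OF mT module.subspace_inter[OF mT J_sub S_sub] S_sub])

lemma red:
  assumes t: "t \<in> S r" and x: "x \<in> J" and tx: "t - x \<in> S (rho - 1)" and P: "Phi M (rho - 1)"
    and r1: "rho - 1 \<le> r" and Mr: "real_of_int M \<le> r"
  shows "t \<in> setplus (J \<inter> S r) (S M)"
proof -
  interpret t: module "scT :: complex \<Rightarrow> ('a,'b,'c,'d) tel \<Rightarrow> _" by (rule mT)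
  obtain j m where tj: "t - x = j + m" and j: "j \<in> J" "j \<in> S (rho - 1)" and m: "m \<in> S M"
    using P tx unfolding Phi_def setplus_def by blast
  have jx: "x + j \<in> J" using t.subspace_add[OF J_sub x j(1)] .
  have mr: "m \<in> S r" using S_mono[OF Mr] m by blast
  have "x + j = t - m" using tj by (simp add: algebra_simps)
  then have "x + j \<in> S r" using t.subspace_diff[OF S_sub t mr] by simp
  moreover have "t = (x + j) + m" using tj by (simp add: algebra_simps)
  ultimately show ?thesis unfolding setplus_def using jx m by blast
qed

lemma gen_step:
  fixes M :: int and M0 M1 M2 M3 :: real
  assumes G0: "\<forall>s > M0. \<forall>w \<in> Wgr V W0 s. w \<in> Gsp V W0 s"
    and G1: "\<forall>s > M1. \<forall>w \<in> Wgr V W1 s. w \<in> Gsp V W1 s"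
    and G2: "\<forall>s > M2. \<forall>w \<in> Wgr V W2 s. w \<in> Gsp V W2 s"
    and G3: "\<forall>s > M3. \<forall>w \<in> Wgr V W3 s. w \<in> Gsp V W3 s"
    and MM: "M0 + M1 + M2 + M3 \<le> real_of_int M"
    and IH: "\<forall>r'. r' \<le> r - 1 \<longrightarrow> Phi M r'"
    and w: "w0 \<in> Wgr V W0 r0" "w1 \<in> Wgr V W1 r1" "w2 \<in> Wgr V W2 r2" "w3 \<in> Wgr V W3 r3"
    and r: "r0 + r1 + r2 + r3 \<le> r"
  shows "tn (Rmon a b e) w0 w1 w2 w3 \<in> setplus (J \<inter> S r) (S M)"
proof -
  interpret t: module "scT :: complex \<Rightarrow> ('a,'b,'c,'d) tel \<Rightarrow> _" by (rule mT)
  have Z: "t.subspace (setplus (J \<inter> S r) (S M))" by (rule Z_sub)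
  let ?rho = "r0 + r1 + r2 + r3"
  have Rm: "isMon (Rmon a b e)" using isMon_Rmon[of a b e] by simp
  show ?thesis
  proof (cases "?rho \<le> M")
    case True
    have "tn (Rmon a b e) w0 w1 w2 w3 \<in> S M" by (rule ten_FT[OF Rm w True])
    then show ?thesis unfolding setplus_def using t.subspace_0[OF t.subspace_inter[OF J_sub S_sub]]
      by (intro CollectI exI[of _ 0] exI[of _ "tn (Rmon a b e) w0 w1 w2 w3"]) auto
  next
    case False
    have Mr: "real_of_int M \<le> r" using False r by linarith
    have Prho: "Phi M (?rho - 1)" using IH r by auto
    have rr: "?rho - 1 \<le> r" using r by linarith
    have gens_in: "x \<in> Gsp V W s \<Longrightarrow> x \<in> module.span (msc W) {mY W u (-1) w | u w p. p > 0 \<and> u \<in> Vgr V p \<and> w \<in> Wgr V W (s - of_int p)}"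
      for x s and W :: "('v, 'z::ab_group_add) vmod" unfolding Gsp_def .
    consider "r0 > M0" | "r1 > M1" | "r2 > M2" | "r3 > M3" using False MM by linarith
    then show ?thesis
    proof cases
      case 1
      have "w0 \<in> Gsp V W0 r0" using G0 1 w(1) by blast
      then show ?thesis
      proof (rule lift0[OF Z _ gens_in, rotated])
        fix x assume "x \<in> {mY W0 u (-1) w | u w p. p > 0 \<and> u \<in> Vgr V p \<and> w \<in> Wgr V W0 (r0 - of_int p)}"
        then obtain u w p where x: "x = mY W0 u (-1) w" and p: "p > 0" and u: "u \<in> Vgr V p"
          and ww: "w \<in> Wgr V W0 (r0 - of_int p)" by blast
        have xw: "x \<in> Wgr V W0 r0" using wt_Y[OF V M0 u ww, of "-1"] x by simp
        have tS: "tn (Rmon a b e) x w1 w2 w3 \<in> S r" by (rule ten_FT[OF Rm xw w(2-4) r])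
        show "tn (Rmon a b e) x w1 w2 w3 \<in> setplus (J \<inter> S r) (S M)"
          by (rule red[OF tS RJ[OF Vplus_in[OF u p]] _ Prho rr Mr])
             (use caseD[OF u p ww w(2-4), of ?rho a b e] x in simp_all)
      qed
    next
      case 2
      have "w1 \<in> Gsp V W1 r1" using G1 2 w(2) by blast
      then show ?thesis
      proof (rule lift1[OF Z _ gens_in, rotated])
        fix x assume "x \<in> {mY W1 u (-1) w | u w p. p > 0 \<and> u \<in> Vgr V p \<and> w \<in> Wgr V W1 (r1 - of_int p)}"
        then obtain u w p where x: "x = mY W1 u (-1) w" and p: "p > 0" and u: "u \<in> Vgr V p"
          and ww: "w \<in> Wgr V W1 (r1 - of_int p)" by blast
        have xw: "x \<in> Wgr V W1 r1" using wt_Y[OF V M1 u ww, of "-1"] x by simp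
        have tS: "tn (Rmon a b e) w0 x w2 w3 \<in> S r" by (rule ten_FT[OF Rm w(1) xw w(3-4) r])
        have J': "- Rmul a b e (genA V W0 W1 W2 W3 u w0 w w2 w3) \<in> J"
          by (rule module.subspace_neg[OF mT J_sub RJ[OF Vplus_in[OF u p]]]) simp
        show "tn (Rmon a b e) w0 x w2 w3 \<in> setplus (J \<inter> S r) (S M)"
          by (rule red[OF tS J' _ Prho rr Mr])
             (use caseA[OF u p w(1) ww w(3-4), of ?rho a b e] x in simp_all)
      qed
    next
      case 3
      have "w2 \<in> Gsp V W2 r2" using G2 3 w(3) by blast
      then show ?thesis
      proof (rule lift2[OF Z _ gens_in, rotated])
        fix x assume "x \<in> {mY W2 u (-1) w | u w p. p > 0 \<and> u \<in> Vgr V p \<and> w \<in> Wgr V W2 (r2 - of_int p)}"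
        then obtain u w p where x: "x = mY W2 u (-1) w" and p: "p > 0" and u: "u \<in> Vgr V p"
          and ww: "w \<in> Wgr V W2 (r2 - of_int p)" by blast
        have xw: "x \<in> Wgr V W2 r2" using wt_Y[OF V M2 u ww, of "-1"] x by simp
        have tS: "tn (Rmon a b e) w0 w1 x w3 \<in> S r" by (rule ten_FT[OF Rm w(1,2) xw w(4) r])
        have J': "- Rmul a b e (genB V W0 W1 W2 W3 u w0 w1 w w3) \<in> J"
          by (rule module.subspace_neg[OF mT J_sub RJ[OF Vplus_in[OF u p]]]) simp
        show "tn (Rmon a b e) w0 w1 x w3 \<in> setplus (J \<inter> S r) (S M)"
          by (rule red[OF tS J' _ Prho rr Mr])
             (use caseB[OF u p w(1,2) ww w(4), of ?rho a b e] x in simp_all)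
      qed
    next
      case 4
      have "w3 \<in> Gsp V W3 r3" using G3 4 w(4) by blast
      then show ?thesis
      proof (rule lift3[OF Z _ gens_in, rotated])
        fix x assume "x \<in> {mY W3 u (-1) w | u w p. p > 0 \<and> u \<in> Vgr V p \<and> w \<in> Wgr V W3 (r3 - of_int p)}"
        then obtain u w p where x: "x = mY W3 u (-1) w" and p: "p > 0" and u: "u \<in> Vgr V p"
          and ww: "w \<in> Wgr V W3 (r3 - of_int p)" by blast
        have xw: "x \<in> Wgr V W3 r3" using wt_Y[OF V M3 u ww, of "-1"] x by simp
        have tS: "tn (Rmon a b e) w0 w1 w2 x \<in> S r" by (rule ten_FT[OF Rm w(1-3) xw r])
        have J': "- Rmul a b e (genC V W0 W1 W2 W3 u w0 w1 w2 w) \<in> J"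
          by (rule module.subspace_neg[OF mT J_sub RJ[OF Vplus_in[OF u p]]]) simp
        show "tn (Rmon a b e) w0 w1 w2 x \<in> setplus (J \<inter> S r) (S M)"
          by (rule red[OF tS J' _ Prho rr Mr])
             (use caseC[OF u p w(1-3) ww, of ?rho a b e] x in simp_all)
      qed
    qed
  qed
qed

end


context setup4 begin

lemma RT_J:
  assumes g: "g \<in> gens V W0 W1 W2 W3"
  shows "Rmul a b e g \<in> T"
proof -
  interpret t: module "scT :: complex \<Rightarrow> ('a,'b,'c,'d) tel \<Rightarrow> _" by (rule mT)
  have sub: "t.subspace T" by (rule T_sub)
  from g obtain h u w0 w1 w2 w3 where g: "g = h V W0 W1 W2 W3 u w0 w1 w2 w3" and h: "h \<in> {genA, genB, genC, genD}"
    unfolding gens_def by blast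
  have "Rmul a b e (genA V W0 W1 W2 W3 u w0 w1 w2 w3) \<in> T"
    unfolding genA_def Rmul_diff
    by (intro t.subspace_diff[OF sub] Rmul_fsum_in[OF sub] RT_T isMon_intros)
  moreover have "Rmul a b e (genB V W0 W1 W2 W3 u w0 w1 w2 w3) \<in> T"
    unfolding genB_def Rmul_diff
    by (intro t.subspace_diff[OF sub] Rmul_fsum_in[OF sub] RT_T isMon_intros)
  moreover have "Rmul a b e (genC V W0 W1 W2 W3 u w0 w1 w2 w3) \<in> T"
    unfolding genC_def Rmul_diff
    by (intro t.subspace_diff[OF sub] Rmul_fsum_in[OF sub] RT_T isMon_intros)
  moreover have "Rmul a b e (genD V W0 W1 W2 W3 u w0 w1 w2 w3) \<in> T"
    unfolding genD_def Dterm1_def Dterm2_def Rmul_diff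
    by (intro t.subspace_diff[OF sub] Rmul_fsum_in[OF sub] RT_T isMon_intros)
  ultimately show ?thesis using g h by auto
qed

lemma J_T: "J \<subseteq> T"
  unfolding Jsp_def
  by (rule module.span_minimal[OF mT _ T_sub]) (auto intro: RT_J)

lemma S_T: "S r \<subseteq> T"
  unfolding FT_def Tsp_def by (rule module.span_mono[OF mT]) blast

lemma allPhi:
  fixes M :: int
  assumes step: "\<And>r. (\<forall>r'. r' \<le> r - 1 \<longrightarrow> Phi M r') \<Longrightarrow> Phi M r"
  shows "Phi M r"
proof -
  have "\<forall>r. r \<le> real_of_int M + real n \<longrightarrow> Phi M r" for n :: nat
  proof (induct n)
    case 0
    show ?case
    proof (intro allI impI)
      fix r assume r: "r \<le> real_of_int M + real 0"
      show "Phi M r" unfolding Phi_def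
      proof
        fix t assume t: "t \<in> S r"
        have "t \<in> S M" using S_mono[of r M] r t by auto
        moreover have "0 \<in> J \<inter> S r"
          using module.subspace_0[OF mT J_sub] module.subspace_0[OF mT S_sub] by blast
        ultimately show "t \<in> setplus (J \<inter> S r) (S M)" unfolding setplus_def by force
      qed
    qed
  next
    case (Suc n)
    show ?case
    proof (intro allI impI)
      fix r assume "r \<le> real_of_int M + real (Suc n)"
      then have "\<forall>r'. r' \<le> r - 1 \<longrightarrow> Phi M r'" using Suc by auto
      then show "Phi M r" by (rule step)
    qed
  qed
  then have A: "\<forall>r'. r' \<le> real_of_int M + real (nat \<lceil>r - real_of_int M\<rceil>) \<longrightarrow> Phi M r'" by blast
  have "r \<le> real_of_int M + real (nat \<lceil>r - real_of_int M\<rceil>)" by linarith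
  then show ?thesis using A by blast
qed

lemma main:
  assumes C0: "C1_cofinite V W0" and C1: "C1_cofinite V W1"
    and C2: "C1_cofinite V W2" and C3: "C1_cofinite V W3"
  shows "\<exists>M::int.
     (\<forall>r::real. S r \<subseteq> setplus (J \<inter> S r) (S (real_of_int M)))
     \<and> T = setplus J (S (real_of_int M))"
proof -
  interpret t: module "scT :: complex \<Rightarrow> ('a,'b,'c,'d) tel \<Rightarrow> _" by (rule mT)
  obtain M0 where G0: "\<forall>s > M0. \<forall>w \<in> Wgr V W0 s. w \<in> Gsp V W0 s" using C1_claim[OF V M0 C0] by blast
  obtain M1 where G1: "\<forall>s > M1. \<forall>w \<in> Wgr V W1 s. w \<in> Gsp V W1 s" using C1_claim[OF V setup4.M1[OF setup4_axioms] C1] by blast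
  obtain M2 where G2: "\<forall>s > M2. \<forall>w \<in> Wgr V W2 s. w \<in> Gsp V W2 s" using C1_claim[OF V setup4.M2[OF setup4_axioms] C2] by blast
  obtain M3 where G3: "\<forall>s > M3. \<forall>w \<in> Wgr V W3 s. w \<in> Gsp V W3 s" using C1_claim[OF V setup4.M3[OF setup4_axioms] C3] by blast
  define M where "M = \<lceil>M0 + M1 + M2 + M3\<rceil>"
  have MM: "M0 + M1 + M2 + M3 \<le> real_of_int M" unfolding M_def by linarith
  have P: "Phi M r" for r
  proof (rule allPhi)
    fix r assume IH: "\<forall>r'. r' \<le> r - 1 \<longrightarrow> Phi M r'"
    let ?Gr = "{ten W0 W1 W2 W3 (Rmon a b c) w0 w1 w2 w3 | a b c w0 w1 w2 w3 r0 r1 r2 r3.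
        w0 \<in> Wgr V W0 r0 \<and> w1 \<in> Wgr V W1 r1 \<and> w2 \<in> Wgr V W2 r2 \<and> w3 \<in> Wgr V W3 r3 \<and>
        r0 + r1 + r2 + r3 \<le> r}"
    have eq: "S r = t.span ?Gr" by (simp only: FT_def)
    have "?Gr \<subseteq> setplus (J \<inter> S r) (S M)"
      by (auto intro!: gen_step[OF G0 G1 G2 G3 MM IH])
    then have X: "t.span ?Gr \<subseteq> setplus (J \<inter> S r) (S M)"
      by (rule t.span_minimal[OF _ Z_sub])
    have "S r \<subseteq> setplus (J \<inter> S r) (S M)"
      using X unfolding eq[symmetric] .
    then show "Phi M r" unfolding Phi_def .
  qed
  have Z: "t.subspace (setplus J (S M))" by (rule setplus_sub[OF mT J_sub S_sub])
  have hom: "tn (Rmon a b e) w0 w1 w2 w3 \<in> setplus J (S M)"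
    if "w0 \<in> Wgr V W0 r0" "w1 \<in> Wgr V W1 r1" "w2 \<in> Wgr V W2 r2" "w3 \<in> Wgr V W3 r3" for a b e w0 w1 w2 w3 r0 r1 r2 r3
  proof -
    have "tn (Rmon a b e) w0 w1 w2 w3 \<in> S (r0 + r1 + r2 + r3)"
      by (rule ten_FT[OF _ that]) (use isMon_Rmon[of a b e] in simp_all)
    then show ?thesis using P[of "r0 + r1 + r2 + r3"] unfolding Phi_def setplus_def by blast
  qed
  have allT: "tn (Rmon a b e) w0 w1 w2 w3 \<in> setplus J (S M)" for a b e w0 w1 w2 w3
    apply (rule lift0[OF Z _ gd_span[OF dm_gd[OF M0] dm_vs[OF M0]]])
    apply (rule lift1[OF Z _ gd_span[OF dm_gd[OF setup4.M1[OF setup4_axioms]] dm_vs[OF setup4.M1[OF setup4_axioms]]]])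
    apply (rule lift2[OF Z _ gd_span[OF dm_gd[OF setup4.M2[OF setup4_axioms]] dm_vs[OF setup4.M2[OF setup4_axioms]]]])
    apply (rule lift3[OF Z _ gd_span[OF dm_gd[OF setup4.M3[OF setup4_axioms]] dm_vs[OF setup4.M3[OF setup4_axioms]]]])
    apply (auto intro: hom)
    done
  have le: "T \<subseteq> setplus J (S M)"
    unfolding Tsp_def by (rule t.span_minimal[OF _ Z]) (auto intro: allT)
  have ge: "setplus J (S M) \<subseteq> T"
    unfolding setplus_def using J_T S_T t.subspace_add[OF T_sub] by blast
  show ?thesis
    by (rule exI[of _ M]) (use P le ge in \<open>auto simp: Phi_def\<close>)
qed

end

theorem proposition1p1:
  fixes V :: "'v::ab_group_add voa"
    and W0 :: "('v, 'a::ab_group_add) vmod" and W1 :: "('v, 'b::ab_group_add) vmod"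
    and W2 :: "('v, 'c::ab_group_add) vmod" and W3 :: "('v, 'd::ab_group_add) vmod"
  assumes "is_VOA V"
    and "is_disc_module V W0" and "is_disc_module V W1"
    and "is_disc_module V W2" and "is_disc_module V W3"
    and "C1_cofinite V W0" and "C1_cofinite V W1"
    and "C1_cofinite V W2" and "C1_cofinite V W3"
  shows "\<exists>M::int.
     (\<forall>r::real. FT V W0 W1 W2 W3 r \<subseteq>
        setplus (Jsp V W0 W1 W2 W3 \<inter> FT V W0 W1 W2 W3 r) (FT V W0 W1 W2 W3 (real_of_int M)))
     \<and> Tsp W0 W1 W2 W3 = setplus (Jsp V W0 W1 W2 W3) (FT V W0 W1 W2 W3 (real_of_int M))"
proof -
  interpret setup4 V W0 W1 W2 W3 using assms(1-5) by unfold_locales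
  show ?thesis by (rule main[OF assms(6-9)])
qed


end
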